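(* Let $\boldsymbol\mu\in\mathbb{C}_+^n$ have distinct entries, so that $\mathcal{V}(\boldsymbol\mu)=\operatorname{span}\{v[\mu_k]\}_{k=1}^n$ is an $n$-dimensional subspace of $\mathcal{H}_2$, and let $\boldsymbol\lambda\in\mathbb{C}_-^r$ have distinct entries, so that $\mathcal{T}(\boldsymbol\lambda)=\operatorname{span}\{v[-\overline{\lambda_j}],v[-\overline{\lambda_j}]'\}_{j=1}^r$ is a $2r$-dimensional subspace of $\mathcal{H}_2$. Let $\epsilon>0$. If for each $\lambda_k$ there exist entries of $\boldsymbol\mu$, denoted $\mu_{k,1},\mu_{k,2},\mu_{k,3}$, with $|\mu_{k,t}+\overline{\lambda_k}|\le\epsilon$ for $t=1,2,3$, and no entry $\mu_{k,t}$ is repeated, then there exists a constant $C$ independent of $\epsilon$ such that $$\sin\phi_{\max}(\mathcal{T}(\boldsymbol\lambda),\mathcal{V}(\boldsymbol\mu))\le C\epsilon.$$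
   Context: $\mathcal{H}_2$ is the Hilbert space of functions analytic in the right half-plane with inner product $\langle F,G\rangle_{\mathcal{H}_2}=\frac{1}{2\pi}\int_{-\infty}^{\infty}\overline{F(\mathrm{i}\omega)}G(\mathrm{i}\omega)\,d\omega$. $\mathbb{C}_+=\{\operatorname{Re}z>0\}$, $\mathbb{C}_-=\{\operatorname{Re}z<0\}$. For $\mu\in\mathbb{C}_+$, $v[\mu](z)=(z+\overline\mu)^{-1}$ and $v[\mu]'(z)=-(z+\overline\mu)^{-2}$. Subspace angles: for finite-dimensional subspaces $\mathcal{X},\mathcal{Y}\subset\mathcal{H}_2$ of dimensions $m,n$ with unitary basis operators $B_{\mathcal{X}}:\mathbb{C}^m\to\mathcal{X}$, $B_{\mathcal{Y}}:\mathbb{C}^n\to\mathcal{Y}$, the principal angles $\phi_1\le\dots\le\phi_{\min(m,n)}$ satisfy $\cos\phi_k=\sigma_k(B_{\mathcal{X}}^*B_{\mathcal{Y}})$ (singular values in descending order), and $\phi_{\max}(\mathcal{X},\mathcal{Y})$ is the largest principal angle. *)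

theory Defs
  imports "HOL-Analysis.Analysis"
begin

text \<open>H2 inner product on the imaginary axis (functions analytic in the right half-plane
  are represented as functions complex => complex).\<close>
definition H2_inner :: "(complex \<Rightarrow> complex) \<Rightarrow> (complex \<Rightarrow> complex) \<Rightarrow> complex" where
  "H2_inner F G =
     (LINT \<omega>|lborel. cnj (F (\<i> * complex_of_real \<omega>)) * G (\<i> * complex_of_real \<omega>)) / (2 * pi)"

definition vfun :: "complex \<Rightarrow> complex \<Rightarrow> complex" where
  "vfun \<mu> z = 1 / (z + cnj \<mu>)"

definition vfun' :: "complex \<Rightarrow> complex \<Rightarrow> complex" where
  "vfun' \<mu> z = - 1 / (z + cnj \<mu>) ^ 2"

definition cspan :: "(complex \<Rightarrow> complex) list \<Rightarrow> (complex \<Rightarrow> complex) set" where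
  "cspan fs = {(\<lambda>z. \<Sum>k<length fs. c k * (fs ! k) z) | c. True}"

definition Vspace :: "complex list \<Rightarrow> (complex \<Rightarrow> complex) set" where
  "Vspace mus = cspan (map vfun mus)"

definition Tspace :: "complex list \<Rightarrow> (complex \<Rightarrow> complex) set" where
  "Tspace ls = cspan (concat (map (\<lambda>l. [vfun (- cnj l), vfun' (- cnj l)]) ls))"

text \<open>A unitary basis operator C^m -> X is given by an orthonormal basis list of X.\<close>
definition is_onb :: "(complex \<Rightarrow> complex) set \<Rightarrow> (complex \<Rightarrow> complex) list \<Rightarrow> bool" where
  "is_onb X bs \<longleftrightarrow> set bs \<subseteq> X \<and> X \<subseteq> cspan bs \<and>
     (\<forall>i<length bs. \<forall>j<length bs. H2_inner (bs ! i) (bs ! j) = (if i = j then 1 else 0))"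

definition cmat_eigenvalue :: "nat \<Rightarrow> (nat \<Rightarrow> nat \<Rightarrow> complex) \<Rightarrow> complex \<Rightarrow> bool" where
  "cmat_eigenvalue p P e \<longleftrightarrow>
     (\<exists>v. (\<exists>i<p. v i \<noteq> 0) \<and> (\<forall>i<p. (\<Sum>j<p. P i j * v j) = e * v i))"

definition singular_values :: "nat \<Rightarrow> nat \<Rightarrow> (nat \<Rightarrow> nat \<Rightarrow> complex) \<Rightarrow> real set" where
  "singular_values m n M =
     (if m \<le> n
      then {\<sigma>. \<sigma> \<ge> 0 \<and> cmat_eigenvalue m (\<lambda>i k. \<Sum>j<n. M i j * cnj (M k j)) (complex_of_real (\<sigma>\<^sup>2))}
      else {\<sigma>. \<sigma> \<ge> 0 \<and> cmat_eigenvalue n (\<lambda>i k. \<Sum>j<m. cnj (M j i) * M j k) (complex_of_real (\<sigma>\<^sup>2))})"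

text \<open>Largest principal angle: cos phi_max = sigma_min(m,n)(B_X^* B_Y), the smallest singular value,
  for unitary basis operators (orthonormal bases) of X and Y.\<close>
definition phi_max :: "(complex \<Rightarrow> complex) set \<Rightarrow> (complex \<Rightarrow> complex) set \<Rightarrow> real" where
  "phi_max X Y =
     (let bx = (SOME bs. is_onb X bs); by = (SOME bs. is_onb Y bs)
      in arccos (Min (singular_values (length bx) (length by)
                        (\<lambda>i j. H2_inner (bx ! i) (by ! j)))))"

end

theory Submission
  imports Defs "HOL-Complex_Analysis.Complex_Analysis" "HOL-Probability.Sinc_Integral"
    "Jordan_Normal_Form.Char_Poly" "HOL-Library.Function_Algebras"
begin

definition nice :: "(complex \<Rightarrow> complex) \<Rightarrow> bool" where
  "nice f \<longleftrightarrow> continuous_on UNIV (\<lambda>\<omega>::real. f (\<i> * of_real \<omega>)) \<and>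
     (\<exists>K. \<forall>\<omega>::real. (cmod (f (\<i> * of_real \<omega>)))^2 \<le> K / (1 + \<omega>^2))"

lemma sq_sum_le: "((a::real) + b)^2 \<le> 2*a^2 + 2*b^2"
proof -
  have "0 \<le> (a - b)^2" by simp
  then show ?thesis by (simp add: power2_eq_square algebra_simps)
qed

lemma nice_add: "nice f \<Longrightarrow> nice g \<Longrightarrow> nice (\<lambda>z. f z + g z)"
proof -
  assume f: "nice f" and g: "nice g"
  then obtain K1 K2 where K1: "\<And>\<omega>::real. (cmod (f (\<i> * of_real \<omega>)))^2 \<le> K1 / (1 + \<omega>^2)"
    and K2: "\<And>\<omega>::real. (cmod (g (\<i> * of_real \<omega>)))^2 \<le> K2 / (1 + \<omega>^2)"
    unfolding nice_def by blast
  have c: "continuous_on UNIV (\<lambda>\<omega>::real. f (\<i> * of_real \<omega>) + g (\<i> * of_real \<omega>))"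
    using f g unfolding nice_def by (intro continuous_intros) auto
  have "(cmod (f (\<i> * of_real \<omega>) + g (\<i> * of_real \<omega>)))^2 \<le> (2*K1 + 2*K2) / (1 + \<omega>^2)" for \<omega> :: real
  proof -
    have "(cmod (f (\<i> * of_real \<omega>) + g (\<i> * of_real \<omega>)))^2 \<le> (cmod (f (\<i> * of_real \<omega>)) + cmod (g (\<i> * of_real \<omega>)))^2"
      by (intro power_mono norm_triangle_ineq) auto
    also have "\<dots> \<le> 2 * (cmod (f (\<i> * of_real \<omega>)))^2 + 2 * (cmod (g (\<i> * of_real \<omega>)))^2"
      by (rule sq_sum_le)
    also have "\<dots> \<le> 2 * (K1 / (1 + \<omega>^2)) + 2 * (K2 / (1 + \<omega>^2))"
      using K1[of \<omega>] K2[of \<omega>] by linarith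
    also have "\<dots> = (2*K1 + 2*K2) / (1 + \<omega>^2)" by (simp add: add_divide_distrib)
    finally show ?thesis .
  qed
  with c show ?thesis unfolding nice_def by blast
qed

lemma nice_scale: "nice f \<Longrightarrow> nice (\<lambda>z. c * f z)"
proof -
  assume f: "nice f"
  then obtain K1 where K1: "\<And>\<omega>::real. (cmod (f (\<i> * of_real \<omega>)))^2 \<le> K1 / (1 + \<omega>^2)"
    unfolding nice_def by blast
  have c: "continuous_on UNIV (\<lambda>\<omega>::real. c * f (\<i> * of_real \<omega>))"
    using f unfolding nice_def by (intro continuous_intros) auto
  have "(cmod (c * f (\<i> * of_real \<omega>)))^2 \<le> ((cmod c)^2 * K1) / (1 + \<omega>^2)" for \<omega> :: real
  proof -
    have "(cmod (c * f (\<i> * of_real \<omega>)))^2 = (cmod c)^2 * (cmod (f (\<i> * of_real \<omega>)))^2"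
      by (simp add: norm_mult power_mult_distrib)
    also have "\<dots> \<le> (cmod c)^2 * (K1 / (1 + \<omega>^2))"
      by (intro mult_left_mono K1) auto
    finally show ?thesis by simp
  qed
  with c show ?thesis unfolding nice_def by blast
qed

lemma nice_zero: "nice (\<lambda>z. 0)"
  unfolding nice_def by (auto intro: exI[of _ 0])

lemma nice_sum: "finite A \<Longrightarrow> (\<And>k. k \<in> A \<Longrightarrow> nice (f k)) \<Longrightarrow> nice (\<lambda>z. \<Sum>k\<in>A. f k z)"
proof (induction A rule: finite_induct)
  case empty then show ?case by (simp add: nice_zero)
next
  case (insert x F)
  then show ?case by (simp add: nice_add)
qed

lemma nice_neg: "nice f \<Longrightarrow> nice (\<lambda>z. - f z)"
  using nice_scale[of f "-1"] by simp

lemma nice_diff: "nice f \<Longrightarrow> nice g \<Longrightarrow> nice (\<lambda>z. f z - g z)"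
  using nice_add[of f "\<lambda>z. - g z"] nice_neg[of g] by simp

lemma cmod_iw_minus_sq: "(cmod (\<i> * of_real \<omega> - a))^2 = (Re a)^2 + (\<omega> - Im a)^2"
  by (simp only: cmod_power2) (simp add: power2_eq_square algebra_simps)

lemma pole_bound:
  assumes "Re a < 0"
  shows "\<exists>KK>0. \<forall>\<omega>::real. 1 / (cmod (\<i> * of_real \<omega> - a))^2 \<le> KK / (1 + \<omega>^2)"
proof -
  define r where "r = Re a"
  define s where "s = Im a"
  have r2: "r^2 > 0" using assms r_def by simp
  define KK where "KK = (1 + 2 * s^2) / r^2 + 2"
  have KK0: "(1 + 2 * s^2) / r^2 \<ge> 0" using r2 by (intro divide_nonneg_pos) auto
  have KKpos: "KK > 0" unfolding KK_def using KK0 by linarith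
  have "1 / (cmod (\<i> * of_real \<omega> - a))^2 \<le> KK / (1 + \<omega>^2)" for \<omega> :: real
  proof -
    define t where "t = r^2 + (\<omega> - s)^2"
    have t: "(cmod (\<i> * of_real \<omega> - a))^2 = t" unfolding t_def r_def s_def by (rule cmod_iw_minus_sq)
    have tpos: "t > 0" unfolding t_def using r2 zero_le_power2[of "\<omega> - s"] by linarith
    have w2: "\<omega>^2 \<le> 2 * s^2 + 2 * (\<omega>-s)^2"
      using sq_sum_le[of s "\<omega> - s"] by (simp add: algebra_simps)
    have e1: "(1 + 2 * s^2) / r^2 * t = (1 + 2 * s^2) + (1 + 2 * s^2) / r^2 * (\<omega> - s)^2"
      unfolding t_def using r2 by (simp add: field_simps)
    have e2: "(1 + 2 * s^2) / r^2 * (\<omega> - s)^2 \<ge> 0" using r2 by simp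
    have e3: "2 * t \<ge> 2 * (\<omega> - s)^2" unfolding t_def by simp
    have e4: "KK * t = (1 + 2 * s^2) / r^2 * t + 2 * t" unfolding KK_def by (simp add: distrib_right)
    have KKt: "KK * t \<ge> 1 + \<omega>^2" using e1 e2 e3 e4 w2 by linarith
    have "1 / t \<le> KK / (1 + \<omega>^2)"
      proof -
      have p: "1 + \<omega>^2 > 0" using zero_le_power2[of \<omega>] by linarith
      show ?thesis using KKt tpos p by (simp add: divide_simps mult.commute)
    qed
    then show ?thesis unfolding t .
  qed
  with KKpos show ?thesis by blast
qed

lemma vfun_eq: "vfun \<mu> z = 1 / (z - (- cnj \<mu>))"
  unfolding vfun_def by simp

lemma nice_vfun: assumes "Re \<mu> > 0" shows "nice (vfun \<mu>)"
proof -
  have a: "Re (- cnj \<mu>) < 0" using assms by simp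
  obtain K where K: "K > 0" "\<And>\<omega>::real. 1 / (cmod (\<i> * of_real \<omega> - (- cnj \<mu>)))^2 \<le> K / (1 + \<omega>^2)"
    using pole_bound[OF a] by blast
  have nz: "\<i> * of_real \<omega> + cnj \<mu> \<noteq> 0" for \<omega> :: real
  proof
    assume "\<i> * of_real \<omega> + cnj \<mu> = 0"
    then have "Re (\<i> * of_real \<omega> + cnj \<mu>) = 0" by simp
    then show False using assms by simp
  qed
  have c: "continuous_on UNIV (\<lambda>\<omega>::real. vfun \<mu> (\<i> * of_real \<omega>))"
    unfolding vfun_def using nz by (intro continuous_intros) auto
  have "(cmod (vfun \<mu> (\<i> * of_real \<omega>)))^2 \<le> K / (1 + \<omega>^2)" for \<omega> :: real
    using K(2)[of \<omega>] unfolding vfun_def by (simp add: norm_divide power_divide)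
  with c show ?thesis unfolding nice_def by blast
qed

lemma nice_vfun': assumes "Re \<mu> > 0" shows "nice (vfun' \<mu>)"
proof -
  have a: "Re (- cnj \<mu>) < 0" using assms by simp
  obtain K where K: "K > 0" "\<And>\<omega>::real. 1 / (cmod (\<i> * of_real \<omega> - (- cnj \<mu>)))^2 \<le> K / (1 + \<omega>^2)"
    using pole_bound[OF a] by blast
  have nz: "\<i> * of_real \<omega> + cnj \<mu> \<noteq> 0" for \<omega> :: real
  proof
    assume "\<i> * of_real \<omega> + cnj \<mu> = 0"
    then have "Re (\<i> * of_real \<omega> + cnj \<mu>) = 0" by simp
    then show False using assms by simp
  qed
  have c: "continuous_on UNIV (\<lambda>\<omega>::real. vfun' \<mu> (\<i> * of_real \<omega>))"
    unfolding vfun'_def using nz by (intro continuous_intros) auto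
  have "(cmod (vfun' \<mu> (\<i> * of_real \<omega>)))^2 \<le> (K / (Re \<mu>)^2) / (1 + \<omega>^2)" for \<omega> :: real
  proof -
    define d where "d = cmod (\<i> * of_real \<omega> + cnj \<mu>)"
    have d2: "d^2 = (Re \<mu>)^2 + (\<omega> - Im \<mu>)^2"
      unfolding d_def by (simp only: cmod_power2) (simp add: power2_eq_square algebra_simps)
    have dge: "d^2 \<ge> (Re \<mu>)^2" using d2 by simp
    have rpos: "(Re \<mu>)^2 > 0" using assms by simp
    have Kd: "1 / d^2 \<le> K / (1 + \<omega>^2)" using K(2)[of \<omega>] unfolding d_def by simp
    have "(cmod (vfun' \<mu> (\<i> * of_real \<omega>)))^2 = (1 / d^2)^2"
      unfolding vfun'_def d_def by (simp add: norm_divide norm_power)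
    also have "\<dots> = (1 / d^2) * (1 / d^2)" by (simp add: power2_eq_square)
    also have "\<dots> \<le> (1 / (Re \<mu>)^2) * (K / (1 + \<omega>^2))"
      apply (rule mult_mono)
      using dge rpos Kd by (auto simp: frac_le)
    also have "\<dots> = (K / (Re \<mu>)^2) / (1 + \<omega>^2)" by simp
    finally show ?thesis .
  qed
  with c show ?thesis unfolding nice_def by blast
qed

lemma integrable_inv1: "integrable lborel (\<lambda>x::real. inverse (1 + x^2))"
  using integrable_inverse_1_plus_square by (simp add: set_integrable_def einterval_def)

lemma nice_measurable:
  assumes "nice f"
  shows "(\<lambda>\<omega>::real. f (\<i> * of_real \<omega>)) \<in> borel_measurable lborel"
  using assms unfolding nice_def by (auto intro: borel_measurable_continuous_onI)

lemma nice_bound: "nice f \<Longrightarrow> \<exists>K\<ge>0. \<forall>\<omega>::real. (cmod (f (\<i> * of_real \<omega>)))^2 \<le> K * inverse (1 + \<omega>^2)"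
proof -
  assume "nice f"
  then obtain K where K: "\<And>\<omega>::real. (cmod (f (\<i> * of_real \<omega>)))^2 \<le> K / (1 + \<omega>^2)"
    unfolding nice_def by blast
  have k0: "(cmod (f 0))^2 \<le> K" using K[of 0] by simp
  have "0 \<le> (cmod (f 0))^2" by simp
  then have "0 \<le> K" using k0 by linarith
  then show ?thesis using K by (auto simp: divide_inverse)
qed

lemma integrable_nice:
  assumes f: "nice f" and g: "nice g"
  shows "integrable lborel (\<lambda>\<omega>::real. cnj (f (\<i> * of_real \<omega>)) * g (\<i> * of_real \<omega>))"
proof -
  obtain K1 where K1: "K1 \<ge> 0" "\<And>\<omega>::real. (cmod (f (\<i> * of_real \<omega>)))^2 \<le> K1 * inverse (1 + \<omega>^2)"
    using nice_bound[OF f] by blast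
  obtain K2 where K2: "K2 \<ge> 0" "\<And>\<omega>::real. (cmod (g (\<i> * of_real \<omega>)))^2 \<le> K2 * inverse (1 + \<omega>^2)"
    using nice_bound[OF g] by blast
  have int: "integrable lborel (\<lambda>x::real. (K1 + K2) * inverse (1 + x^2))"
    using integrable_inv1 by (rule integrable_mult_right)
  show ?thesis
  proof (rule Bochner_Integration.integrable_bound[OF int])
    show "(\<lambda>\<omega>::real. cnj (f (\<i> * of_real \<omega>)) * g (\<i> * of_real \<omega>)) \<in> borel_measurable lborel"
    proof -
      have "continuous_on UNIV (\<lambda>\<omega>::real. cnj (f (\<i> * of_real \<omega>)) * g (\<i> * of_real \<omega>))"
        using f g unfolding nice_def by (intro continuous_intros) auto
      then show ?thesis by (auto intro: borel_measurable_continuous_onI)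
    qed
    show "AE x in lborel. norm (cnj (f (\<i> * of_real x)) * g (\<i> * of_real x)) \<le> norm ((K1 + K2) * inverse (1 + x^2))"
    proof (rule AE_I2)
      fix x :: real
      define a where "a = cmod (f (\<i> * of_real x))"
      define b where "b = cmod (g (\<i> * of_real x))"
      have p0: "1 + x^2 > 0" using zero_le_power2[of x] by linarith
      then have p: "inverse (1 + x^2) > 0" by simp
      have "norm (cnj (f (\<i> * of_real x)) * g (\<i> * of_real x)) = a * b"
        unfolding a_def b_def by (simp add: norm_mult)
      also have "\<dots> \<le> a^2 + b^2"
      proof -
        have "0 \<le> (a - b)^2" by simp
        then have "2 * (a * b) \<le> a^2 + b^2" by (simp add: power2_eq_square algebra_simps)
        moreover have "a \<ge> 0" "b \<ge> 0" unfolding a_def b_def by auto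
        then have "a * b \<ge> 0" by simp
        ultimately show ?thesis by linarith
      qed
      also have "\<dots> \<le> K1 * inverse (1 + x^2) + K2 * inverse (1 + x^2)"
        unfolding a_def b_def using K1(2)[of x] K2(2)[of x] by linarith
      also have "\<dots> = norm ((K1 + K2) * inverse (1 + x^2))"
        using K1(1) K2(1) p by (simp add: distrib_right abs_mult)
      finally show "norm (cnj (f (\<i> * of_real x)) * g (\<i> * of_real x)) \<le> norm ((K1 + K2) * inverse (1 + x^2))" .
    qed
  qed
qed

lemma H2_inner_add_right:
  assumes "nice f" "nice g" "nice h"
  shows "H2_inner f (\<lambda>z. g z + h z) = H2_inner f g + H2_inner f h"
  unfolding H2_inner_def
  using integrable_nice[OF assms(1,2)] integrable_nice[OF assms(1,3)]
  by (simp add: distrib_left add_divide_distrib)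

lemma H2_inner_scale_right: "H2_inner f (\<lambda>z. c * g z) = c * H2_inner f g"
proof -
  have e: "(\<lambda>\<omega>::real. cnj (f (\<i> * of_real \<omega>)) * (c * g (\<i> * of_real \<omega>)))
         = (\<lambda>\<omega>. c * (cnj (f (\<i> * of_real \<omega>)) * g (\<i> * of_real \<omega>)))"
    by (rule ext) (rule mult.left_commute)
  show ?thesis unfolding H2_inner_def e integral_mult_right_zero by simp
qed

lemma H2_inner_cnj: "H2_inner g f = cnj (H2_inner f g)"
proof -
  have "cnj (LINT \<omega>|lborel. cnj (f (\<i> * complex_of_real \<omega>)) * g (\<i> * complex_of_real \<omega>))
     = (LINT \<omega>|lborel. cnj (cnj (f (\<i> * complex_of_real \<omega>)) * g (\<i> * complex_of_real \<omega>)))"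
    by (rule Bochner_Integration.integral_cnj[symmetric])
  also have "\<dots> = (LINT \<omega>|lborel. cnj (g (\<i> * complex_of_real \<omega>)) * f (\<i> * complex_of_real \<omega>))"
    by (simp add: mult.commute)
  finally show ?thesis unfolding H2_inner_def by simp
qed

lemma H2_inner_sum_right:
  assumes "finite A" "nice f" "\<And>k. k \<in> A \<Longrightarrow> nice (g k)"
  shows "H2_inner f (\<lambda>z. \<Sum>k\<in>A. g k z) = (\<Sum>k\<in>A. H2_inner f (g k))"
  using assms
proof (induction A rule: finite_induct)
  case empty
  then show ?case unfolding H2_inner_def by simp
next
  case (insert x F)
  have "H2_inner f (\<lambda>z. \<Sum>k\<in>insert x F. g k z) = H2_inner f (\<lambda>z. g x z + (\<Sum>k\<in>F. g k z))"
    using insert by simp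
  also have "\<dots> = H2_inner f (g x) + H2_inner f (\<lambda>z. \<Sum>k\<in>F. g k z)"
    using insert by (intro H2_inner_add_right nice_sum) auto
  finally show ?case using insert by simp
qed

lemma H2_inner_add_left:
  assumes "nice f" "nice g" "nice h"
  shows "H2_inner (\<lambda>z. g z + h z) f = H2_inner g f + H2_inner h f"
proof -
  have "H2_inner (\<lambda>z. g z + h z) f = cnj (H2_inner f (\<lambda>z. g z + h z))" by (rule H2_inner_cnj)
  also have "\<dots> = cnj (H2_inner f g + H2_inner f h)" using H2_inner_add_right[OF assms] by simp
  finally show ?thesis by (simp add: H2_inner_cnj[of f g] H2_inner_cnj[of f h])
qed

lemma H2_inner_scale_left: "H2_inner (\<lambda>z. c * g z) f = cnj c * H2_inner g f"
proof -
  have "H2_inner (\<lambda>z. c * g z) f = cnj (H2_inner f (\<lambda>z. c * g z))" by (rule H2_inner_cnj)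
  also have "\<dots> = cnj (c * H2_inner f g)" by (simp only: H2_inner_scale_right)
  finally show ?thesis by (simp add: H2_inner_cnj[of f g])
qed

lemma H2_inner_sum_left:
  assumes "finite A" "nice f" "\<And>k. k \<in> A \<Longrightarrow> nice (g k)"
  shows "H2_inner (\<lambda>z. \<Sum>k\<in>A. g k z) f = (\<Sum>k\<in>A. H2_inner (g k) f)"
proof -
  have "H2_inner (\<lambda>z. \<Sum>k\<in>A. g k z) f = cnj (H2_inner f (\<lambda>z. \<Sum>k\<in>A. g k z))" by (rule H2_inner_cnj)
  also have "\<dots> = cnj (\<Sum>k\<in>A. H2_inner f (g k))" using H2_inner_sum_right[OF assms] by simp
  also have "\<dots> = (\<Sum>k\<in>A. cnj (H2_inner f (g k)))" by (rule cnj_sum)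
  also have "\<dots> = (\<Sum>k\<in>A. H2_inner (g k) f)" by (intro sum.cong refl) (rule H2_inner_cnj[symmetric])
  finally show ?thesis .
qed

lemma H2_inner_neg_right: "H2_inner f (\<lambda>z. - g z) = - H2_inner f g"
  using H2_inner_scale_right[of f "-1" g] by simp

lemma H2_inner_diff_right:
  assumes "nice f" "nice g" "nice h"
  shows "H2_inner f (\<lambda>z. g z - h z) = H2_inner f g - H2_inner f h"
  using H2_inner_add_right[OF assms(1,2) nice_neg[OF assms(3)]] H2_inner_neg_right[of f h] by simp

lemma H2_inner_diff_left:
  assumes "nice f" "nice g" "nice h"
  shows "H2_inner (\<lambda>z. g z - h z) f = H2_inner g f - H2_inner h f"
proof -
  have "H2_inner (\<lambda>z. g z - h z) f = cnj (H2_inner f (\<lambda>z. g z - h z))" by (rule H2_inner_cnj)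
  also have "\<dots> = cnj (H2_inner f g - H2_inner f h)" using H2_inner_diff_right[OF assms] by simp
  finally show ?thesis by (simp add: H2_inner_cnj[of f g] H2_inner_cnj[of f h])
qed

lemma cnj_mult_self: "cnj z * z = complex_of_real ((cmod z)^2)"
  unfolding complex_norm_square by (rule mult.commute)

definition nsq :: "(complex \<Rightarrow> complex) \<Rightarrow> real" where
  "nsq f = (LINT \<omega>|lborel. (cmod (f (\<i> * of_real \<omega>)))^2) / (2 * pi)"

lemma H2_inner_self: "H2_inner f f = complex_of_real (nsq f)"
proof -
  have "(LINT \<omega>|lborel. cnj (f (\<i> * complex_of_real \<omega>)) * f (\<i> * complex_of_real \<omega>))
      = (LINT \<omega>|lborel. complex_of_real ((cmod (f (\<i> * of_real \<omega>)))^2))"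
    by (simp only: cnj_mult_self)
  also have "\<dots> = complex_of_real (LINT \<omega>|lborel. (cmod (f (\<i> * of_real \<omega>)))^2)"
    by (rule integral_complex_of_real)
  finally show ?thesis unfolding H2_inner_def nsq_def by simp
qed

lemma nsq_nonneg: "nsq f \<ge> 0"
  unfolding nsq_def by (intro divide_nonneg_pos integral_nonneg_AE) auto

lemma integrable_sq:
  assumes "nice f"
  shows "integrable lborel (\<lambda>\<omega>::real. (cmod (f (\<i> * of_real \<omega>)))^2)"
proof -
  have "integrable lborel (\<lambda>\<omega>::real. cnj (f (\<i> * of_real \<omega>)) * f (\<i> * of_real \<omega>))"
    using integrable_nice[OF assms assms] .
  then have "integrable lborel (\<lambda>\<omega>::real. complex_of_real ((cmod (f (\<i> * of_real \<omega>)))^2))"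
    by (simp only: cnj_mult_self)
  then show ?thesis by (simp only: complex_of_real_integrable_eq)
qed

lemma nsq_bound:
  assumes "nice f" "B \<ge> 0" "\<And>\<omega>::real. (cmod (f (\<i> * of_real \<omega>)))^2 \<le> B * inverse (1 + \<omega>^2)"
  shows "nsq f \<le> B * ((LINT \<omega>|lborel. inverse (1 + \<omega>^2)) / (2 * pi))"
proof -
  have "(LINT \<omega>|lborel. (cmod (f (\<i> * of_real \<omega>)))^2) \<le> (LINT \<omega>|lborel. B * inverse (1 + \<omega>^2))"
    by (intro integral_mono integrable_sq assms integrable_mult_right integrable_inv1)
  also have "\<dots> = B * (LINT \<omega>|lborel. inverse (1 + \<omega>^2))" by simp
  finally show ?thesis unfolding nsq_def by (simp add: divide_right_mono)
qed

lemma nsq_zero: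
  assumes "nice f" "nsq f = 0"
  shows "f (\<i> * of_real \<omega>) = 0"
proof -
  have "(LINT \<omega>|lborel. (cmod (f (\<i> * of_real \<omega>)))^2) = 0" using assms(2) unfolding nsq_def by simp
  then have "AE x in lborel. (cmod (f (\<i> * of_real x)))^2 = 0"
    using integral_nonneg_eq_0_iff_AE[OF integrable_sq[OF assms(1)]] by simp
  then have ae: "AE x in lborel. x \<in> {x \<in> UNIV. f (\<i> * of_real x) = 0}" by simp
  have cl: "closed {x \<in> UNIV. f (\<i> * of_real x) = 0}"
    using assms(1) unfolding nice_def by (intro continuous_closed_preimage_constant) auto
  have "AE x \<in> UNIV in lebesgue. x \<in> {x \<in> UNIV. f (\<i> * of_real x) = 0}"
    using AE_completion[OF ae] by simp
  then have "\<omega> \<in> {x \<in> UNIV. f (\<i> * of_real x) = 0}"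
    by (rule mem_closed_if_AE_lebesgue_open[OF open_UNIV cl]) simp
  then show ?thesis by simp
qed

definition fscale :: "complex \<Rightarrow> (complex \<Rightarrow> complex) \<Rightarrow> (complex \<Rightarrow> complex)" where
  "fscale c f = (\<lambda>z. c * f z)"

interpretation FS: vector_space fscale
  by unfold_locales (auto simp: fscale_def fun_eq_iff algebra_simps plus_fun_def)

lemma sum_fun_apply: "(\<Sum>k\<in>A. F k) z = (\<Sum>k\<in>A. (F k) z)" for F :: "'i \<Rightarrow> complex \<Rightarrow> complex"
  by (induction A rule: infinite_finite_induct) (auto simp: plus_fun_def zero_fun_def)

lemma cspan_mem: "g \<in> cspan fs \<longleftrightarrow> (\<exists>c. g = (\<lambda>z. \<Sum>k<length fs. c k * (fs ! k) z))"
  unfolding cspan_def by auto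

lemma cspan_subspace: "FS.subspace (cspan fs)"
  unfolding FS.subspace_def
proof (intro conjI ballI allI)
  show "0 \<in> cspan fs" unfolding cspan_mem
    by (rule exI[of _ "\<lambda>k. 0"]) (simp add: zero_fun_def)
next
  fix x y assume "x \<in> cspan fs" "y \<in> cspan fs"
  then obtain c d where c: "x = (\<lambda>z. \<Sum>k<length fs. c k * (fs ! k) z)"
    and d: "y = (\<lambda>z. \<Sum>k<length fs. d k * (fs ! k) z)" unfolding cspan_mem by blast
  show "x + y \<in> cspan fs" unfolding cspan_mem
    by (rule exI[of _ "\<lambda>k. c k + d k"]) (simp add: c d plus_fun_def distrib_right sum.distrib)
next
  fix a x assume "x \<in> cspan fs"
  then obtain c where c: "x = (\<lambda>z. \<Sum>k<length fs. c k * (fs ! k) z)" unfolding cspan_mem by blast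
  show "fscale a x \<in> cspan fs" unfolding cspan_mem
    by (rule exI[of _ "\<lambda>k. a * c k"]) (simp add: c fscale_def sum_distrib_left mult.assoc)
qed

lemma sum_delta_mult: "finite A \<Longrightarrow> j \<in> A \<Longrightarrow> (\<Sum>k\<in>A. (if k = j then 1 else 0) * (x k::complex)) = x j"
proof -
  assume "finite A" "j \<in> A"
  have "(\<Sum>k\<in>A. (if k = j then 1 else 0) * x k) = (\<Sum>k\<in>A. if k = j then x k else 0)"
    by (intro sum.cong refl) simp
  also have "\<dots> = x j" using \<open>finite A\<close> \<open>j \<in> A\<close> by (simp add: sum.delta')
  finally show ?thesis .
qed

lemma cspan_base: "j < length fs \<Longrightarrow> fs ! j \<in> cspan fs"
  unfolding cspan_mem
proof (rule exI[of _ "\<lambda>k. if k = j then 1 else 0"])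
  assume j: "j < length fs"
  show "fs ! j = (\<lambda>z. \<Sum>k<length fs. (if k = j then 1 else 0) * (fs ! k) z)"
    using j by (intro ext) (simp add: sum_delta_mult)
qed

lemma cspan_span: "cspan fs = FS.span (set fs)"
proof
  show "cspan fs \<subseteq> FS.span (set fs)"
  proof
    fix g assume "g \<in> cspan fs"
    then obtain c where c: "g = (\<lambda>z. \<Sum>k<length fs. c k * (fs ! k) z)" unfolding cspan_mem by blast
    have "g = (\<Sum>k<length fs. fscale (c k) (fs ! k))"
      unfolding c by (rule ext) (simp add: sum_fun_apply fscale_def)
    also have "\<dots> \<in> FS.span (set fs)"
      by (intro FS.span_sum FS.span_scale FS.span_base) simp
    finally show "g \<in> FS.span (set fs)" .
  qed
next
  show "FS.span (set fs) \<subseteq> cspan fs"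
  proof (rule FS.span_minimal[OF _ cspan_subspace])
    show "set fs \<subseteq> cspan fs"
      by (auto simp: in_set_conv_nth intro: cspan_base)
  qed
qed

lemma nice_span:
  assumes "\<And>f. f \<in> S \<Longrightarrow> nice f" "g \<in> FS.span S"
  shows "nice g"
proof -
  have "FS.subspace {f. nice f}"
    unfolding FS.subspace_def
    using nice_zero nice_add nice_scale
    by (auto simp: zero_fun_def plus_fun_def fscale_def)
  then show ?thesis using FS.span_induct[OF assms(2)] assms(1) by blast
qed

definition orthonormal :: "(complex \<Rightarrow> complex) list \<Rightarrow> bool" where
  "orthonormal bs \<longleftrightarrow> (\<forall>i<length bs. \<forall>j<length bs. H2_inner (bs ! i) (bs ! j) = (if i = j then 1 else 0))"

lemma span_subset_span: "A \<subseteq> FS.span B \<Longrightarrow> FS.span A \<subseteq> FS.span B"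
  by (rule FS.span_minimal) (auto intro: FS.subspace_span)

lemma GS:
  assumes "finite S" "\<And>f. f \<in> S \<Longrightarrow> nice f"
    "\<And>f. f \<in> FS.span S \<Longrightarrow> H2_inner f f = 0 \<Longrightarrow> f = 0"
  shows "\<exists>bs. set bs \<subseteq> FS.span S \<and> FS.span S \<subseteq> FS.span (set bs) \<and> orthonormal bs"
  using assms
proof (induction S rule: finite_induct)
  case empty
  show ?case by (rule exI[of _ "[]"]) (simp add: orthonormal_def)
next
  case (insert f F)
  have sub: "FS.span F \<subseteq> FS.span (insert f F)" by (rule FS.span_mono) auto
  have niceF: "\<And>g. g \<in> FS.span (insert f F) \<Longrightarrow> nice g"
    using insert.prems(1) by (rule nice_span) 
  obtain bs where bs1: "set bs \<subseteq> FS.span F" and bs2: "FS.span F \<subseteq> FS.span (set bs)"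
    and bs3: "orthonormal bs"
    using insert.IH insert.prems sub by blast
  define n where "n = length bs"
  have nice_bs: "\<And>i. i < n \<Longrightarrow> nice (bs ! i)"
    using bs1 sub niceF unfolding n_def by (meson nth_mem subsetD)
  have nice_f: "nice f" using insert.prems(1) by simp
  define c where "c i = H2_inner (bs ! i) f" for i
  define P where "P = (\<lambda>z. \<Sum>i<n. c i * (bs ! i) z)"
  define r where "r = (\<lambda>z. f z - P z)"
  have nice_P: "nice P" unfolding P_def by (intro nice_sum nice_scale nice_bs) auto
  have nice_r: "nice r" unfolding r_def by (intro nice_diff nice_P nice_f)
  have P_span: "P \<in> FS.span (set bs)"
  proof -
    have "P = (\<Sum>i<n. fscale (c i) (bs ! i))"
      unfolding P_def by (rule ext) (simp add: sum_fun_apply fscale_def)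
    also have "\<dots> \<in> FS.span (set bs)"
      by (intro FS.span_sum FS.span_scale FS.span_base) (simp add: n_def)
    finally show ?thesis .
  qed
  have bsF: "FS.span (set bs) \<subseteq> FS.span F" using bs1 by (rule span_subset_span)
  have f_span: "f \<in> FS.span (insert f F)" by (rule FS.span_base) simp
  have r_eq: "r = f - P" unfolding r_def by (simp add: fun_eq_iff)
  have r_span: "r \<in> FS.span (insert f F)"
    unfolding r_eq using P_span bsF sub f_span by (intro FS.span_diff) auto
  have orth: "H2_inner (bs ! j) r = 0" if j: "j < n" for j
  proof -
    have "H2_inner (bs ! j) r = H2_inner (bs ! j) f - H2_inner (bs ! j) P"
      unfolding r_def by (intro H2_inner_diff_right nice_bs j nice_f nice_P)
    also have "H2_inner (bs ! j) P = (\<Sum>i<n. H2_inner (bs ! j) (\<lambda>z. c i * (bs ! i) z))"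
      unfolding P_def by (intro H2_inner_sum_right nice_bs j nice_scale) auto
    also have "\<dots> = (\<Sum>i<n. c i * (if j = i then 1 else 0))"
      using bs3 j unfolding orthonormal_def n_def
      by (intro sum.cong refl) (simp add: H2_inner_scale_right)
    also have "\<dots> = c j" using j by (simp add: if_distrib cong: if_cong)
    finally show ?thesis unfolding c_def by simp
  qed
  show ?case
  proof (cases "H2_inner r r = 0")
    case True
    then have "r = 0" using insert.prems(2) r_span by blast
    then have "f = P" unfolding r_def by (simp add: fun_eq_iff)
    then have fbs: "f \<in> FS.span (set bs)" using P_span by simp
    have "insert f F \<subseteq> FS.span (set bs)"
      using fbs bs2 FS.span_superset by blast
    then have "FS.span (insert f F) \<subseteq> FS.span (set bs)" by (rule span_subset_span)
    moreover have "set bs \<subseteq> FS.span (insert f F)" using bs1 sub by blast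
    ultimately show ?thesis using bs3 by blast
  next
    case False
    define \<rho> where "\<rho> = sqrt (nsq r)"
    have nsq_pos: "nsq r > 0" using False nsq_nonneg[of r] H2_inner_self[of r] by force
    then have rho_pos: "\<rho> > 0" unfolding \<rho>_def by simp
    define b where "b = (\<lambda>z. complex_of_real (1 / \<rho>) * r z)"
    have nice_b: "nice b" unfolding b_def by (intro nice_scale nice_r)
    have b_eq: "b = fscale (complex_of_real (1 / \<rho>)) r" unfolding b_def fscale_def by simp
    define bs' where "bs' = bs @ [b]"
    have len': "length bs' = n + 1" unfolding bs'_def n_def by simp
    have nth': "bs' ! i = (if i < n then bs ! i else b)" if "i < n + 1" for i
      using that unfolding bs'_def n_def by (auto simp: nth_append)
    have b_span: "b \<in> FS.span (insert f F)" unfolding b_eq by (intro FS.span_scale r_span)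
    have set1: "set bs' \<subseteq> FS.span (insert f F)" unfolding bs'_def using bs1 sub b_span by auto
    have bs_sub: "FS.span (set bs) \<subseteq> FS.span (set bs')"
      unfolding bs'_def by (rule FS.span_mono) auto
    have b_in: "b \<in> FS.span (set bs')" unfolding bs'_def by (rule FS.span_base) simp
    have f_eq: "f = P + fscale (complex_of_real \<rho>) b"
      unfolding b_def fscale_def r_def using rho_pos by (simp add: fun_eq_iff)
    have "f \<in> FS.span (set bs')"
      unfolding f_eq using P_span bs_sub b_in by (intro FS.span_add FS.span_scale) auto
    then have "insert f F \<subseteq> FS.span (set bs')"
      using bs2 bs_sub FS.span_superset by blast
    then have set2: "FS.span (insert f F) \<subseteq> FS.span (set bs')" by (rule span_subset_span)
    have bb: "H2_inner b b = 1"
    proof -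
      have "H2_inner b b = cnj (complex_of_real (1 / \<rho>)) * (complex_of_real (1 / \<rho>) * H2_inner r r)"
        unfolding b_def by (simp only: H2_inner_scale_left H2_inner_scale_right)
      also have "\<dots> = complex_of_real ((1 / \<rho>) * (1 / \<rho>) * nsq r)"
        by (simp add: H2_inner_self)
      also have "(1 / \<rho>) * (1 / \<rho>) * nsq r = 1"
        unfolding \<rho>_def using nsq_pos by (simp add: real_sqrt_mult[symmetric])
      finally show ?thesis by simp
    qed
    have ib: "H2_inner (bs ! i) b = 0" if "i < n" for i
      unfolding b_def H2_inner_scale_right using orth[OF that] by simp
    have bi: "H2_inner b (bs ! i) = 0" if "i < n" for i
      using ib[OF that] H2_inner_cnj[of "bs ! i" b] by simp
    have "orthonormal bs'"
      unfolding orthonormal_def len'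
    proof (intro allI impI)
      fix i j assume i: "i < n + 1" and j: "j < n + 1"
      show "H2_inner (bs' ! i) (bs' ! j) = (if i = j then 1 else 0)"
        using bs3 i j ib bi bb unfolding nth'[OF i] nth'[OF j] orthonormal_def n_def
        by (cases "i < length bs"; cases "j < length bs") auto
    qed
    then show ?thesis using set1 set2 by blast
  qed
qed

lemma exists_onb:
  assumes "\<And>f. f \<in> set fs \<Longrightarrow> nice f"
    "\<And>f. f \<in> cspan fs \<Longrightarrow> H2_inner f f = 0 \<Longrightarrow> f = 0"
  shows "\<exists>bs. is_onb (cspan fs) bs"
proof -
  obtain bs where "set bs \<subseteq> FS.span (set fs)" "FS.span (set fs) \<subseteq> FS.span (set bs)" "orthonormal bs"
    using GS[of "set fs"] assms unfolding cspan_span by blast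
  then show ?thesis unfolding is_onb_def cspan_span orthonormal_def by blast
qed

lemma cont_zero_aux:
  fixes G :: "complex \<Rightarrow> complex"
  assumes "isCont G a" "open S'" "a \<in> S'" "\<And>z. z \<in> S' \<Longrightarrow> z \<noteq> a \<Longrightarrow> G z = 0"
  shows "G a = 0"
proof -
  have "eventually (\<lambda>z. z \<in> S') (nhds a)" using assms(2,3) by (rule eventually_nhds_in_open)
  then have "eventually (\<lambda>z. G z = 0) (at a)"
    unfolding eventually_at_filter by (rule eventually_mono) (use assms(4) in auto)
  then have "(G \<longlongrightarrow> 0) (at a)" by (rule tendsto_eventually)
  moreover have "(G \<longlongrightarrow> G a) (at a)" using assms(1) by (simp add: isCont_def)
  ultimately show ?thesis using tendsto_unique[OF trivial_limit_at] by metis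
qed

lemma sq_pole_aux: "(w::complex) \<noteq> 0 \<Longrightarrow> w^2 * (c / w + d / w^2) = c * w + d"
  by (simp add: field_simps power2_eq_square)

lemma pole_aux: "(w::complex) \<noteq> 0 \<Longrightarrow> w * (c / w + 0 / w^2) = c"
  by simp

lemma poles_zero:
  fixes q c d :: "nat \<Rightarrow> complex"
  assumes inj: "inj_on q {..<n}" and re: "\<And>k. k < n \<Longrightarrow> Re (q k) \<noteq> 0"
    and zero: "\<And>\<omega>::real. (\<Sum>k<n. c k / (\<i> * of_real \<omega> - q k) + d k / (\<i> * of_real \<omega> - q k)^2) = 0"
  shows "\<forall>k<n. c k = 0 \<and> d k = 0"
proof -
  define F where "F z = (\<Sum>k<n. c k / (z - q k) + d k / (z - q k)^2)" for z
  define Q where "Q = q ` {..<n}"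
  define S where "S = - Q"
  have finQ: "finite Q" unfolding Q_def by simp
  have openS: "open S" unfolding S_def using finite_imp_closed[OF finQ] by (simp add: open_Compl)
  have connS: "connected S" unfolding S_def
    using connected_open_diff_countable[of "UNIV :: complex set" Q] finQ
    by (simp add: Compl_eq_Diff_UNIV countable_finite connected_UNIV)
  have holF: "F holomorphic_on S"
    unfolding F_def S_def Q_def by (intro holomorphic_intros) auto
  define U where "U = range (\<lambda>\<omega>::real. \<i> * of_real \<omega>)"
  have US: "U \<subseteq> S"
  proof
    fix z assume "z \<in> U"
    then obtain \<omega> :: real where z: "z = \<i> * of_real \<omega>" unfolding U_def by auto
    show "z \<in> S" unfolding S_def
    proof
      assume "z \<in> Q"
      then obtain k where k: "k < n" "z = q k" unfolding Q_def by auto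
      have "Re (q k) = Re (\<i> * complex_of_real \<omega>)" using z k(2) by simp
      then have "Re (q k) = 0" by simp
      then show False using re k by simp
    qed
  qed
  have 0: "0 \<in> U" unfolding U_def by (auto intro: image_eqI[of _ _ 0])
  have lim: "0 islimpt U"
    unfolding islimpt_approachable
  proof (intro allI impI)
    fix e :: real assume e: "e > 0"
    show "\<exists>x'\<in>U. x' \<noteq> 0 \<and> dist x' 0 < e"
    proof (rule bexI[of _ "\<i> * of_real (e/2)"])
      show "\<i> * complex_of_real (e / 2) \<in> U" unfolding U_def by (rule rangeI)
      show "\<i> * complex_of_real (e / 2) \<noteq> 0 \<and> dist (\<i> * complex_of_real (e / 2)) 0 < e"
        using e by (simp add: norm_mult)
    qed
  qed
  have FU: "F z = 0" if "z \<in> U" for z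
    using that zero unfolding U_def F_def by auto
  have FS0: "F w = 0" if "w \<in> S" for w
    by (rule analytic_continuation[OF holF openS connS US _ lim FU that]) (use 0 US in auto)
  have notQ: "z \<notin> Q \<Longrightarrow> k < n \<Longrightarrow> z \<noteq> q k" for z k unfolding Q_def by auto
  define S' where "S' j = - (Q - {q j})" for j
  have S'open: "open (S' j)" for j
  proof -
    have "closed (Q - {q j})" using finQ by (intro finite_imp_closed) auto
    then show ?thesis unfolding S'_def by (rule open_Compl)
  qed
  have S'mem: "q j \<in> S' j" for j unfolding S'_def by simp
  have S'S: "z \<in> S' j \<Longrightarrow> z \<noteq> q j \<Longrightarrow> z \<in> S" for z j unfolding S'_def S_def by auto
  have qne: "j < n \<Longrightarrow> k < n \<Longrightarrow> k \<noteq> j \<Longrightarrow> q j - q k \<noteq> 0" for j k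
    using inj by (auto dest: inj_onD)
  have dz: "d j = 0" if j: "j < n" for j
  proof -
    define G where "G z = (\<Sum>k<n. if k = j then c j * (z - q j) + d j
        else (z - q j)^2 * (c k / (z - q k) + d k / (z - q k)^2))" for z
    have "isCont G (q j)"
      unfolding G_def
    proof (intro continuous_intros)
      fix k assume k: "k \<in> {..<n}"
      show "isCont (\<lambda>z. if k = j then c j * (z - q j) + d j
        else (z - q j)^2 * (c k / (z - q k) + d k / (z - q k)^2)) (q j)"
      proof (cases "k = j")
        case True then show ?thesis by (simp add: continuous_intros)
      next
        case False then have "q j - q k \<noteq> 0" using qne j k by auto
        then show ?thesis using False by (auto intro!: continuous_intros)
      qed
    qed
    moreover have "G z = 0" if "z \<in> S' j" "z \<noteq> q j" for z
    proof -
      have zS: "z \<in> S" using S'S that by blast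
      have "G z = (z - q j)^2 * F z"
        unfolding G_def F_def sum_distrib_left
      proof (intro sum.cong refl)
        fix k assume k: "k \<in> {..<n}"
        show "(if k = j then c j * (z - q j) + d j else (z - q j)^2 * (c k / (z - q k) + d k / (z - q k)^2))
            = (z - q j)^2 * (c k / (z - q k) + d k / (z - q k)^2)"
          using that(2) sq_pole_aux[of "z - q j" "c j" "d j"] by auto
      qed
      then show ?thesis using FS0[OF zS] by simp
    qed
    ultimately have "G (q j) = 0" by (rule cont_zero_aux[OF _ S'open S'mem])
    moreover have "G (q j) = d j"
    proof -
      have "G (q j) = (\<Sum>k<n. if k = j then d j else 0)"
        unfolding G_def by (intro sum.cong refl) simp
      also have "\<dots> = d j" using j by (simp add: sum.delta')
      finally show ?thesis .
    qed
    ultimately show ?thesis by simp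
  qed
  have cz: "c j = 0" if j: "j < n" for j
  proof -
    define G where "G z = (\<Sum>k<n. if k = j then c j
        else (z - q j) * (c k / (z - q k)))" for z
    have "isCont G (q j)"
      unfolding G_def
    proof (intro continuous_intros)
      fix k assume k: "k \<in> {..<n}"
      show "isCont (\<lambda>z. if k = j then c j
        else (z - q j) * (c k / (z - q k))) (q j)"
      proof (cases "k = j")
        case True then show ?thesis by (simp add: continuous_intros)
      next
        case False then have "q j - q k \<noteq> 0" using qne j k by auto
        then show ?thesis using False by (auto intro!: continuous_intros)
      qed
    qed
    moreover have "G z = 0" if "z \<in> S' j" "z \<noteq> q j" for z
    proof -
      have zS: "z \<in> S" using S'S that by blast
      have "G z = (z - q j) * F z"
        unfolding G_def F_def sum_distrib_left
      proof (intro sum.cong refl)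
        fix k assume k: "k \<in> {..<n}"
        show "(if k = j then c j else (z - q j) * (c k / (z - q k)))
            = (z - q j) * (c k / (z - q k) + d k / (z - q k)^2)"
        proof -
          have dk: "d k = 0" using dz k by auto
          show ?thesis
          proof (cases "k = j")
            case True then show ?thesis using that(2) dk by simp
          next
            case False then show ?thesis using dk by simp
          qed
        qed
      qed
      then show ?thesis using FS0[OF zS] by simp
    qed
    ultimately have "G (q j) = 0" by (rule cont_zero_aux[OF _ S'open S'mem])
    moreover have "G (q j) = c j"
    proof -
      have "G (q j) = (\<Sum>k<n. if k = j then c j else 0)"
        unfolding G_def by (intro sum.cong refl) simp
      also have "\<dots> = c j" using j by (simp add: sum.delta')
      finally show ?thesis .
    qed
    ultimately show ?thesis by simp
  qed
  show ?thesis using cz dz by blast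
qed

definition TL :: "complex list \<Rightarrow> (complex \<Rightarrow> complex) list" where
  "TL ls = concat (map (\<lambda>l. [vfun (- cnj l), vfun' (- cnj l)]) ls)"

lemma Tspace_TL: "Tspace ls = cspan (TL ls)"
  unfolding Tspace_def TL_def ..

lemma TL_length: "length (TL ls) = 2 * length ls"
  unfolding TL_def by (induction ls) auto

lemma TL_nth:
  "j < length ls \<Longrightarrow> TL ls ! (2*j) = vfun (- cnj (ls ! j)) \<and> TL ls ! (2*j+1) = vfun' (- cnj (ls ! j))"
proof (induction ls arbitrary: j)
  case Nil then show ?case by simp
next
  case (Cons l ls)
  have e: "TL (l # ls) = vfun (- cnj l) # vfun' (- cnj l) # TL ls" unfolding TL_def by simp
  show ?case
  proof (cases j)
    case 0 then show ?thesis unfolding e by simp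
  next
    case (Suc j')
    then have "j' < length ls" using Cons.prems by simp
    then show ?thesis using Cons.IH[of j'] unfolding e Suc by simp
  qed
qed

lemma sum_2: "(\<Sum>k<2*r. h k) = (\<Sum>j<r. h (2*j) + h (2*j+1))" for h :: "nat \<Rightarrow> 'a::comm_monoid_add"
  by (induction r) (simp_all add: algebra_simps)

lemma vfun_neg_cnj: "vfun (- cnj l) z = 1 / (z - l)"
  unfolding vfun_def by simp

lemma vfun'_neg_cnj: "vfun' (- cnj l) z = - 1 / (z - l)^2"
  unfolding vfun'_def by simp

lemma set_TL: "set (TL ls) = (\<lambda>l. vfun (- cnj l)) ` set ls \<union> (\<lambda>l. vfun' (- cnj l)) ` set ls"
  unfolding TL_def by auto

lemma nice_TL:
  assumes "\<forall>l\<in>set ls. Re l < 0"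
  shows "\<And>f. f \<in> set (TL ls) \<Longrightarrow> nice f"
  using assms unfolding set_TL by (auto intro!: nice_vfun nice_vfun')

lemma nice_V:
  assumes "\<forall>m\<in>set mus. Re m > 0"
  shows "\<And>f. f \<in> set (map vfun mus) \<Longrightarrow> nice f"
  using assms by (auto intro!: nice_vfun)

lemma T_coeff_zero:
  assumes dist: "distinct ls" and re: "\<forall>l\<in>set ls. Re l < 0"
    and zero: "\<And>\<omega>::real. (\<Sum>k<length (TL ls). c k * (TL ls ! k) (\<i> * of_real \<omega>)) = 0"
  shows "\<forall>k<length (TL ls). c k = 0"
proof -
  define r where "r = length ls"
  have eq: "(\<Sum>k<length (TL ls). c k * (TL ls ! k) z)
      = (\<Sum>j<r. c (2*j) / (z - ls ! j) + (- c (2*j+1)) / (z - ls ! j)^2)" for z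
  proof -
    have "(\<Sum>k<length (TL ls). c k * (TL ls ! k) z)
       = (\<Sum>j<r. c (2*j) * (TL ls ! (2*j)) z + c (2*j+1) * (TL ls ! (2*j+1)) z)"
      unfolding TL_length r_def by (rule sum_2)
    also have "\<dots> = (\<Sum>j<r. c (2*j) / (z - ls ! j) + (- c (2*j+1)) / (z - ls ! j)^2)"
    proof (intro sum.cong refl)
      fix j assume "j \<in> {..<r}"
      then have j: "j < length ls" unfolding r_def by simp
      show "c (2*j) * (TL ls ! (2*j)) z + c (2*j+1) * (TL ls ! (2*j+1)) z
          = c (2*j) / (z - ls ! j) + (- c (2*j+1)) / (z - ls ! j)^2"
        using TL_nth[OF j] by (simp add: vfun_neg_cnj vfun'_neg_cnj)
    qed
    finally show ?thesis .
  qed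
  have inj: "inj_on (\<lambda>j. ls ! j) {..<r}" unfolding r_def using dist by (intro inj_on_nth) auto
  have rek: "\<And>k. k < r \<Longrightarrow> Re (ls ! k) \<noteq> 0" unfolding r_def using re by (metis nth_mem order_less_irrefl)
  have "\<forall>k<r. c (2*k) = 0 \<and> - c (2*k+1) = 0"
    by (rule poles_zero[OF inj rek]) (use zero eq in auto)
  then have all: "\<And>j. j < r \<Longrightarrow> c (2*j) = 0 \<and> c (2*j+1) = 0" by simp
  show ?thesis
  proof (intro allI impI)
    fix k assume k: "k < length (TL ls)"
    then have kd: "k div 2 < r" unfolding TL_length r_def by simp
    have "k = 2 * (k div 2) \<or> k = 2 * (k div 2) + 1" by presburger
    then show "c k = 0" using all[OF kd] by auto
  qed
qed

lemma V_coeff_zero: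
  assumes dist: "distinct mus" and re: "\<forall>m\<in>set mus. Re m > 0"
    and zero: "\<And>\<omega>::real. (\<Sum>k<length mus. c k * vfun (mus ! k) (\<i> * of_real \<omega>)) = 0"
  shows "\<forall>k<length mus. c k = 0"
proof -
  define n where "n = length mus"
  define q where "q k = - cnj (mus ! k)" for k
  have eq: "(\<Sum>k<length mus. c k * vfun (mus ! k) z) = (\<Sum>k<n. c k / (z - q k) + 0 / (z - q k)^2)" for z
    unfolding n_def q_def vfun_def by simp
  have inj: "inj_on q {..<n}"
  proof (rule inj_onI)
    fix x y assume "x \<in> {..<n}" "y \<in> {..<n}" "q x = q y"
    then show "x = y" unfolding q_def n_def using dist by (simp add: nth_eq_iff_index_eq)
  qed
  have rek: "Re (q k) \<noteq> 0" if k: "k < n" for k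
  proof -
    have "Re (mus ! k) > 0" using re nth_mem[of k mus] k unfolding n_def by blast
    then show ?thesis unfolding q_def by simp
  qed
  have "\<forall>k<n. c k = 0 \<and> (\<lambda>_. 0) k = (0::complex)"
    by (rule poles_zero[OF inj rek]) (use zero eq in auto)
  then show ?thesis unfolding n_def by simp
qed

lemma nondeg_T:
  assumes dist: "distinct ls" and re: "\<forall>l\<in>set ls. Re l < 0"
    and f: "f \<in> cspan (TL ls)" and z: "H2_inner f f = 0"
  shows "f = 0"
proof -
  obtain c where c: "f = (\<lambda>z. \<Sum>k<length (TL ls). c k * (TL ls ! k) z)" using f unfolding cspan_mem by blast
  have nf: "nice f" using f nice_TL[OF re] unfolding cspan_span by (rule nice_span[rotated])
  have "nsq f = 0" using z H2_inner_self[of f] by simp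
  then have "\<And>\<omega>. f (\<i> * of_real \<omega>) = 0" using nsq_zero[OF nf] by blast
  then have "\<forall>k<length (TL ls). c k = 0" using c by (intro T_coeff_zero[OF dist re]) simp
  then show ?thesis unfolding c by (simp add: fun_eq_iff)
qed

lemma nondeg_V:
  assumes dist: "distinct mus" and re: "\<forall>m\<in>set mus. Re m > 0"
    and f: "f \<in> cspan (map vfun mus)" and z: "H2_inner f f = 0"
  shows "f = 0"
proof -
  obtain c where c: "f = (\<lambda>z. \<Sum>k<length mus. c k * vfun (mus ! k) z)" using f unfolding cspan_mem by auto
  have nf: "nice f" using f nice_V[OF re] unfolding cspan_span by (rule nice_span[rotated])
  have "nsq f = 0" using z H2_inner_self[of f] by simp
  then have "\<And>\<omega>. f (\<i> * of_real \<omega>) = 0" using nsq_zero[OF nf] by blast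
  then have "\<forall>k<length mus. c k = 0" using c by (intro V_coeff_zero[OF dist re]) simp
  then show ?thesis unfolding c by (simp add: fun_eq_iff)
qed

lemma indep_list:
  assumes dist: "distinct L"
    and coeff: "\<And>c. (\<lambda>z. \<Sum>k<length L. c k * (L ! k) z) = 0 \<Longrightarrow> \<forall>k<length L. c k = 0"
  shows "\<not> FS.dependent (set L)"
  unfolding FS.independent_explicit_module
proof (intro allI impI)
  fix t u v assume t: "finite t" "t \<subseteq> set L" "(\<Sum>v\<in>t. fscale (u v) v) = 0" "v \<in> t"
  define n where "n = length L"
  define K where "K = {k. k < n \<and> L ! k \<in> t}"
  define c where "c k = (if L ! k \<in> t then u (L ! k) else 0)" for k
  have injK: "inj_on (\<lambda>k. L ! k) K" unfolding K_def n_def using dist by (intro inj_on_nth) auto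
  have imK: "(\<lambda>k. L ! k) ` K = t"
  proof
    show "(\<lambda>k. L ! k) ` K \<subseteq> t" unfolding K_def by auto
    show "t \<subseteq> (\<lambda>k. L ! k) ` K"
    proof
      fix w assume "w \<in> t"
      then have "w \<in> set L" using t(2) by blast
      then obtain k where "k < n" "L ! k = w" unfolding n_def by (auto simp: in_set_conv_nth)
      then show "w \<in> (\<lambda>k. L ! k) ` K" unfolding K_def using \<open>w \<in> t\<close> by auto
    qed
  qed
  have "(\<lambda>z. \<Sum>k<length L. c k * (L ! k) z) = 0"
  proof (rule ext)
    fix z
    have "(\<Sum>k<length L. c k * (L ! k) z) = (\<Sum>k\<in>K. u (L ! k) * (L ! k) z)"
    proof -
      have "(\<Sum>k<length L. c k * (L ! k) z) = (\<Sum>k\<in>{..<n}. if k \<in> K then u (L ! k) * (L ! k) z else 0)"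
        unfolding n_def K_def c_def by (intro sum.cong refl) auto
      also have "\<dots> = (\<Sum>k\<in>{..<n} \<inter> K. u (L ! k) * (L ! k) z)"
        by (simp add: sum.inter_restrict)
      also have "{..<n} \<inter> K = K" unfolding K_def by auto
      finally show ?thesis .
    qed
    also have "\<dots> = (\<Sum>w\<in>t. u w * w z)"
      using sum.reindex[OF injK, of "\<lambda>w. u w * w z"] imK by simp
    also have "\<dots> = (\<Sum>w\<in>t. fscale (u w) w) z" by (simp add: sum_fun_apply fscale_def)
    also have "\<dots> = 0" using t(3) by simp
    finally show "(\<Sum>k<length L. c k * (L ! k) z) = 0 z" by simp
  qed
  then have "\<forall>k<length L. c k = 0" by (rule coeff)
  moreover have "v \<in> set L" using t(2,4) by blast
  then obtain k where "k < n" "L ! k = v" unfolding n_def by (auto simp: in_set_conv_nth)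
  ultimately show "u v = 0" unfolding c_def n_def using t(4) by auto
qed

lemma orthonormal_indep:
  assumes "orthonormal bs" "\<And>f. f \<in> set bs \<Longrightarrow> nice f"
  shows "distinct bs \<and> \<not> FS.dependent (set bs)"
proof -
  have ip: "\<And>i j. i < length bs \<Longrightarrow> j < length bs \<Longrightarrow> H2_inner (bs ! i) (bs ! j) = (if i = j then 1 else 0)"
    using assms(1) unfolding orthonormal_def by blast
  have nb: "\<And>i. i < length bs \<Longrightarrow> nice (bs ! i)" using assms(2) by simp
  have dist: "distinct bs"
    unfolding distinct_conv_nth
  proof (intro allI impI)
    fix i j assume ij: "i < length bs" "j < length bs" "i \<noteq> j"
    show "bs ! i \<noteq> bs ! j"
    proof
      assume "bs ! i = bs ! j"
      then have "H2_inner (bs ! i) (bs ! j) = H2_inner (bs ! i) (bs ! i)" by simp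
      then show False using ip[of i j] ip[of i i] ij by simp
    qed
  qed
  have "\<not> FS.dependent (set bs)"
  proof (rule indep_list[OF dist])
    fix c assume c: "(\<lambda>z. \<Sum>k<length bs. c k * (bs ! k) z) = 0"
    show "\<forall>k<length bs. c k = 0"
    proof (intro allI impI)
      fix j assume j: "j < length bs"
      have "0 = H2_inner (bs ! j) (\<lambda>z. \<Sum>k<length bs. c k * (bs ! k) z)"
        unfolding c by (simp add: H2_inner_def zero_fun_def)
      also have "\<dots> = (\<Sum>k<length bs. H2_inner (bs ! j) (\<lambda>z. c k * (bs ! k) z))"
        by (intro H2_inner_sum_right nb nice_scale j) auto
      also have "\<dots> = (\<Sum>k<length bs. c k * (if j = k then 1 else 0))"
        by (intro sum.cong refl) (simp add: H2_inner_scale_right ip j)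
      also have "\<dots> = (\<Sum>k<length bs. if k = j then c k else 0)"
        by (intro sum.cong refl) auto
      also have "\<dots> = c j" using j by (simp add: sum.delta')
      finally show "c j = 0" by simp
    qed
  qed
  with dist show ?thesis by blast
qed

lemma card_bound:
  assumes "\<not> FS.dependent S" "S \<subseteq> FS.span (set L)"
  shows "card S \<le> length L"
proof -
  have "card S \<le> card (set L)" using FS.independent_span_bound[of "set L" S] assms by auto
  also have "\<dots> \<le> length L" by (rule card_length)
  finally show ?thesis .
qed

lemma err1:
  fixes z a1 l :: complex
  assumes "cmod (z - a1) \<ge> \<rho>" "cmod (z - l) > 0" "\<rho> > 0" "cmod (a1 - l) \<le> \<epsilon>"
  shows "cmod (1 / (z - l) - 1 / (z - a1)) \<le> (\<epsilon> / \<rho>) / cmod (z - l)"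
proof -
  have n1: "z - a1 \<noteq> 0" using assms(1,3) by auto
  have n2: "z - l \<noteq> 0" using assms(2) by auto
  have e0: "0 \<le> \<epsilon>" using assms(4) norm_ge_zero order_trans by blast
  have "1 / (z - l) - 1 / (z - a1) = (l - a1) / ((z - a1) * (z - l))"
    using n1 n2 by (simp add: field_simps)
  then have "cmod (1 / (z - l) - 1 / (z - a1)) = cmod (a1 - l) / (cmod (z - a1) * cmod (z - l))"
    by (simp add: norm_divide norm_mult norm_minus_commute)
  also have "\<dots> \<le> \<epsilon> / (\<rho> * cmod (z - l))"
    using assms e0 by (intro frac_le mult_right_mono) auto
  finally show ?thesis by simp
qed

lemma err2:
  fixes z a1 a2 l :: complex
  assumes "cmod (z - a1) \<ge> \<rho>" "cmod (z - a2) \<ge> \<rho>" "cmod (z - l) \<ge> \<rho>" "\<rho> > 0" "a1 \<noteq> a2"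
    "cmod (a1 - l) \<le> \<epsilon>" "cmod (a2 - l) \<le> \<epsilon>"
  shows "cmod (- 1 / (z - l)^2 - ((- 1 / (a1 - a2)) * (1 / (z - a1)) - (- 1 / (a1 - a2)) * (1 / (z - a2))))
      \<le> (2 * \<epsilon> / \<rho>^2) / cmod (z - l)"
proof -
  have n1: "z - a1 \<noteq> 0" using assms(1,4) by auto
  have n2: "z - a2 \<noteq> 0" using assms(2,4) by auto
  have n3: "z - l \<noteq> 0" using assms(3,4) by auto
  have n4: "a1 - a2 \<noteq> 0" using assms(5) by auto
  define d where "d = cmod (z - l)"
  have dpos: "d > 0" unfolding d_def using n3 by simp
  have e0: "0 \<le> \<epsilon>" using assms(6) norm_ge_zero order_trans by blast
  have "- 1 / (z - l)^2 - ((- 1 / (a1 - a2)) * (1 / (z - a1)) - (- 1 / (a1 - a2)) * (1 / (z - a2)))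
      = (a2 - l) / ((z - a1) * (z - a2) * (z - l)) + (a1 - l) / ((z - a1) * (z - l) * (z - l))"
  proof -
    define x where "x = z - a1"
    define y where "y = z - a2"
    define s where "s = z - l"
    have x: "x \<noteq> 0" and y: "y \<noteq> 0" and s: "s \<noteq> 0" using n1 n2 n3 unfolding x_def y_def s_def by auto
    have yx: "y - x \<noteq> 0" using n4 unfolding x_def y_def by simp
    have h1: "(- 1 / (y - x)) * (1 / x) - (- 1 / (y - x)) * (1 / y) = - 1 / (x * y)"
    proof -
      have "1 / x - 1 / y = (y - x) / (x * y)" using x y by (simp add: field_simps)
      have "(- 1 / (y - x)) * (1 / x) - (- 1 / (y - x)) * (1 / y) = (- 1 / (y - x)) * (1 / x - 1 / y)"
        by (simp only: right_diff_distrib)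
      also have "\<dots> = (- 1 / (y - x)) * ((y - x) / (x * y))" using \<open>1 / x - 1 / y = (y - x) / (x * y)\<close> by simp
      also have "\<dots> = - 1 / (x * y)" using yx by simp
      finally show ?thesis .
    qed
    have h2: "(s - y) / (x * y * s) = 1 / (x * y) - 1 / (x * s)"
      using x y s by (simp add: field_simps)
    have h3: "(s - x) / (x * s * s) = 1 / (x * s) - 1 / (s * s)"
      using x s by (simp add: field_simps)
    have main: "- 1 / s^2 - ((- 1 / (y - x)) * (1 / x) - (- 1 / (y - x)) * (1 / y))
        = (s - y) / (x * y * s) + (s - x) / (x * s * s)"
      unfolding h1 h2 h3 by (simp add: power2_eq_square)
    have q1: "a1 - a2 = y - x" and q2: "a2 - l = s - y" and q3: "a1 - l = s - x"
      unfolding x_def y_def s_def by simp_all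
    show ?thesis unfolding q1 q2 q3 x_def[symmetric] y_def[symmetric] s_def[symmetric] by (rule main)
  qed
  then have "cmod (- 1 / (z - l)^2 - ((- 1 / (a1 - a2)) * (1 / (z - a1)) - (- 1 / (a1 - a2)) * (1 / (z - a2))))
      \<le> cmod (a2 - l) / (cmod (z - a1) * cmod (z - a2) * d) + cmod (a1 - l) / (cmod (z - a1) * d * d)"
  proof -
    assume eq: "- 1 / (z - l)^2 - ((- 1 / (a1 - a2)) * (1 / (z - a1)) - (- 1 / (a1 - a2)) * (1 / (z - a2)))
      = (a2 - l) / ((z - a1) * (z - a2) * (z - l)) + (a1 - l) / ((z - a1) * (z - l) * (z - l))"
    have "cmod ((a2 - l) / ((z - a1) * (z - a2) * (z - l)) + (a1 - l) / ((z - a1) * (z - l) * (z - l)))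
      \<le> cmod ((a2 - l) / ((z - a1) * (z - a2) * (z - l))) + cmod ((a1 - l) / ((z - a1) * (z - l) * (z - l)))"
      by (rule norm_triangle_ineq)
    also have "\<dots> = cmod (a2 - l) / (cmod (z - a1) * cmod (z - a2) * d) + cmod (a1 - l) / (cmod (z - a1) * d * d)"
      unfolding d_def by (simp add: norm_divide norm_mult)
    finally show ?thesis unfolding eq .
  qed
  also have "\<dots> \<le> \<epsilon> / (\<rho> * \<rho> * d) + \<epsilon> / (\<rho> * \<rho> * d)"
  proof (rule add_mono)
    show "cmod (a2 - l) / (cmod (z - a1) * cmod (z - a2) * d) \<le> \<epsilon> / (\<rho> * \<rho> * d)"
      using assms dpos e0 by (intro frac_le mult_mono mult_right_mono) auto
    have "d \<ge> \<rho>" unfolding d_def using assms(3) .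
    then show "cmod (a1 - l) / (cmod (z - a1) * d * d) \<le> \<epsilon> / (\<rho> * \<rho> * d)"
      using assms dpos e0 by (intro frac_le mult_mono mult_right_mono) auto
  qed
  also have "\<dots> = (2 * \<epsilon> / \<rho>^2) / d" by (simp add: power2_eq_square field_simps)
  finally show ?thesis unfolding d_def .
qed

lemma sq_bound_from:
  assumes "cmod E \<le> B / cmod (\<i> * of_real \<omega> - l)" "B \<ge> 0"
    "1 / (cmod (\<i> * of_real \<omega> - l))^2 \<le> K / (1 + \<omega>^2)"
  shows "(cmod E)^2 \<le> B^2 * K * inverse (1 + \<omega>^2)"
proof -
  have "(cmod E)^2 \<le> (B / cmod (\<i> * of_real \<omega> - l))^2"
    by (rule power_mono[OF assms(1)]) simp
  also have "\<dots> = B^2 * (1 / (cmod (\<i> * of_real \<omega> - l))^2)" by (simp add: power_divide)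
  also have "\<dots> \<le> B^2 * (K / (1 + \<omega>^2))" by (rule mult_left_mono[OF assms(3)]) simp
  finally show ?thesis by (simp add: divide_inverse mult.assoc)
qed

lemma Re_dist: "cmod (\<i> * of_real \<omega> - a) \<ge> - Re a"
proof -
  have "\<bar>Re (\<i> * of_real \<omega> - a)\<bar> \<le> cmod (\<i> * of_real \<omega> - a)" by (rule abs_Re_le_cmod)
  then show ?thesis by simp
qed

lemma approx_one:
  fixes l :: complex
  assumes "Re l < 0"
  shows "\<exists>A \<delta>. A \<ge> 0 \<and> \<delta> > 0 \<and> (\<forall>\<epsilon> \<mu>1 \<mu>2. 0 < \<epsilon> \<longrightarrow> \<epsilon> \<le> \<delta> \<longrightarrow> \<mu>1 \<noteq> \<mu>2 \<longrightarrow>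
      cmod (\<mu>1 + cnj l) \<le> \<epsilon> \<longrightarrow> cmod (\<mu>2 + cnj l) \<le> \<epsilon> \<longrightarrow>
      (\<forall>\<omega>::real. (cmod (vfun (- cnj l) (\<i> * of_real \<omega>) - vfun \<mu>1 (\<i> * of_real \<omega>)))^2 \<le> A * \<epsilon>^2 * inverse (1 + \<omega>^2)) \<and>
      (\<forall>\<omega>::real. (cmod (vfun' (- cnj l) (\<i> * of_real \<omega>) -
          (- 1 / (cnj \<mu>2 - cnj \<mu>1) * vfun \<mu>1 (\<i> * of_real \<omega>) - - 1 / (cnj \<mu>2 - cnj \<mu>1) * vfun \<mu>2 (\<i> * of_real \<omega>))))^2
         \<le> A * \<epsilon>^2 * inverse (1 + \<omega>^2)))"
proof -
  obtain K where K: "K > 0" "\<And>\<omega>::real. 1 / (cmod (\<i> * of_real \<omega> - l))^2 \<le> K / (1 + \<omega>^2)"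
    using pole_bound[OF assms] by blast
  define \<rho> where "\<rho> = - Re l / 2"
  have rho: "\<rho> > 0" unfolding \<rho>_def using assms by simp
  define A where "A = K / \<rho>^2 + 4 * K / \<rho>^4"
  have A0: "A \<ge> 0" unfolding A_def using K rho by simp
  have main: "(\<forall>\<omega>::real. (cmod (vfun (- cnj l) (\<i> * of_real \<omega>) - vfun \<mu>1 (\<i> * of_real \<omega>)))^2 \<le> A * \<epsilon>^2 * inverse (1 + \<omega>^2)) \<and>
      (\<forall>\<omega>::real. (cmod (vfun' (- cnj l) (\<i> * of_real \<omega>) -
          (- 1 / (cnj \<mu>2 - cnj \<mu>1) * vfun \<mu>1 (\<i> * of_real \<omega>) - - 1 / (cnj \<mu>2 - cnj \<mu>1) * vfun \<mu>2 (\<i> * of_real \<omega>))))^2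
         \<le> A * \<epsilon>^2 * inverse (1 + \<omega>^2))"
    if e: "0 < \<epsilon>" "\<epsilon> \<le> \<rho>" and m: "\<mu>1 \<noteq> \<mu>2" "cmod (\<mu>1 + cnj l) \<le> \<epsilon>" "cmod (\<mu>2 + cnj l) \<le> \<epsilon>"
    for \<epsilon> \<mu>1 \<mu>2
  proof -
    define a1 where "a1 = - cnj \<mu>1"
    define a2 where "a2 = - cnj \<mu>2"
    have ad1: "cmod (a1 - l) \<le> \<epsilon>"
    proof -
      have "a1 - l = - cnj (\<mu>1 + cnj l)" unfolding a1_def by simp
      then have "cmod (a1 - l) = cmod (\<mu>1 + cnj l)" by (simp only: norm_minus_cancel complex_mod_cnj)
      then show ?thesis using m(2) by simp
    qed
    have ad2: "cmod (a2 - l) \<le> \<epsilon>"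
    proof -
      have "a2 - l = - cnj (\<mu>2 + cnj l)" unfolding a2_def by simp
      then have "cmod (a2 - l) = cmod (\<mu>2 + cnj l)" by (simp only: norm_minus_cancel complex_mod_cnj)
      then show ?thesis using m(3) by simp
    qed
    have Rea: "Re a \<le> - \<rho>" if "cmod (a - l) \<le> \<epsilon>" for a
    proof -
      have "\<bar>Re (a - l)\<bar> \<le> cmod (a - l)" by (rule abs_Re_le_cmod)
      then have "Re a - Re l \<le> \<epsilon>" using that by simp
      then show ?thesis using e unfolding \<rho>_def by simp
    qed
    have a12: "a1 \<noteq> a2" unfolding a1_def a2_def using m(1) by simp
    have cnjeq: "cnj \<mu>2 - cnj \<mu>1 = a1 - a2" unfolding a1_def a2_def by simp
    have v1: "vfun \<mu>1 z = 1 / (z - a1)" for z unfolding a1_def vfun_def by simp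
    have v2: "vfun \<mu>2 z = 1 / (z - a2)" for z unfolding a2_def vfun_def by simp
    have "(cmod (vfun (- cnj l) (\<i> * of_real \<omega>) - vfun \<mu>1 (\<i> * of_real \<omega>)))^2 \<le> A * \<epsilon>^2 * inverse (1 + \<omega>^2)"
      for \<omega> :: real
    proof -
      define z where "z = \<i> * complex_of_real \<omega>"
      have d1: "cmod (z - a1) \<ge> \<rho>" unfolding z_def using Re_dist[of a1 \<omega>] Rea[OF ad1] by linarith
      have dl: "cmod (z - l) \<ge> 2 * \<rho>" unfolding z_def using Re_dist[of l \<omega>] unfolding \<rho>_def by linarith
      have "cmod (1 / (z - l) - 1 / (z - a1)) \<le> (\<epsilon> / \<rho>) / cmod (z - l)"
        by (rule err1[OF d1 _ rho ad1]) (use dl rho in linarith)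
      then have "(cmod (1 / (z - l) - 1 / (z - a1)))^2 \<le> (\<epsilon> / \<rho>)^2 * K * inverse (1 + \<omega>^2)"
        unfolding z_def by (rule sq_bound_from) (use e rho K(2) in auto)
      also have "\<dots> \<le> A * \<epsilon>^2 * inverse (1 + \<omega>^2)"
      proof -
        have "(\<epsilon> / \<rho>)^2 * K = (K / \<rho>^2) * \<epsilon>^2" by (simp add: power_divide)
        also have "\<dots> \<le> A * \<epsilon>^2" unfolding A_def using K rho by (intro mult_right_mono) auto
        finally show ?thesis by (intro mult_right_mono) auto
      qed
      finally show ?thesis unfolding z_def vfun_neg_cnj v1 .
    qed
    moreover have "(cmod (vfun' (- cnj l) (\<i> * of_real \<omega>) -
          (- 1 / (cnj \<mu>2 - cnj \<mu>1) * vfun \<mu>1 (\<i> * of_real \<omega>) - - 1 / (cnj \<mu>2 - cnj \<mu>1) * vfun \<mu>2 (\<i> * of_real \<omega>))))^2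
         \<le> A * \<epsilon>^2 * inverse (1 + \<omega>^2)" for \<omega> :: real
    proof -
      define z where "z = \<i> * complex_of_real \<omega>"
      have d1: "cmod (z - a1) \<ge> \<rho>" unfolding z_def using Re_dist[of a1 \<omega>] Rea[OF ad1] by linarith
      have d2: "cmod (z - a2) \<ge> \<rho>" unfolding z_def using Re_dist[of a2 \<omega>] Rea[OF ad2] by linarith
      have dl: "cmod (z - l) \<ge> \<rho>" unfolding z_def using Re_dist[of l \<omega>] rho unfolding \<rho>_def by linarith
      have "cmod (- 1 / (z - l)^2 - ((- 1 / (a1 - a2)) * (1 / (z - a1)) - (- 1 / (a1 - a2)) * (1 / (z - a2))))
        \<le> (2 * \<epsilon> / \<rho>^2) / cmod (z - l)"
        by (rule err2[OF d1 d2 dl rho a12 ad1 ad2])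
      then have "(cmod (- 1 / (z - l)^2 - ((- 1 / (a1 - a2)) * (1 / (z - a1)) - (- 1 / (a1 - a2)) * (1 / (z - a2)))))^2
          \<le> (2 * \<epsilon> / \<rho>^2)^2 * K * inverse (1 + \<omega>^2)"
        unfolding z_def by (rule sq_bound_from) (use e rho K(2) in auto)
      also have "\<dots> \<le> A * \<epsilon>^2 * inverse (1 + \<omega>^2)"
      proof -
        have "(2 * \<epsilon> / \<rho>^2)^2 * K = (4 * K / \<rho>^4) * \<epsilon>^2" by (simp add: power_divide power_mult_distrib field_simps)
        also have "\<dots> \<le> A * \<epsilon>^2" unfolding A_def using K rho by (intro mult_right_mono) auto
        finally show ?thesis by (intro mult_right_mono) auto
      qed
      finally show ?thesis unfolding z_def vfun'_neg_cnj v1 v2 cnjeq .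
    qed
    ultimately show ?thesis by blast
  qed
  show ?thesis
    by (rule exI[of _ A], rule exI[of _ \<rho>]) (use A0 rho main in blast)
qed

lemma cmat_eig_jnf:
  "cmat_eigenvalue m P e \<longleftrightarrow> eigenvalue (Matrix.mat m m (\<lambda>(i, j). P i j)) e"
proof
  assume "cmat_eigenvalue m P e"
  then obtain w where w: "\<exists>i<m. w i \<noteq> 0" "\<And>i. i < m \<Longrightarrow> (\<Sum>j<m. P i j * w j) = e * w i"
    unfolding cmat_eigenvalue_def by blast
  define v where "v = Matrix.vec m w"
  have vc: "v \<in> carrier_vec m" unfolding v_def by simp
  have vnz: "v \<noteq> 0\<^sub>v m"
  proof
    assume "v = 0\<^sub>v m"
    then have "\<And>i. i < m \<Longrightarrow> w i = 0" unfolding v_def by (metis index_vec index_zero_vec(1))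
    then show False using w(1) by blast
  qed
  have "Matrix.mat m m (\<lambda>(i, j). P i j) *\<^sub>v v = e \<cdot>\<^sub>v v"
  proof (rule eq_vecI)
    fix i assume i: "i < dim_vec (e \<cdot>\<^sub>v v)"
    then have im: "i < m" unfolding v_def by simp
    have "(Matrix.mat m m (\<lambda>(i, j). P i j) *\<^sub>v v) $ i = (\<Sum>j\<in>{0..<m}. P i j * w j)"
      using im unfolding v_def by (simp add: mult_mat_vec_def scalar_prod_def)
    also have "\<dots> = (\<Sum>j<m. P i j * w j)" by (simp add: atLeast0LessThan)
    also have "\<dots> = e * w i" using w(2)[OF im] .
    also have "\<dots> = (e \<cdot>\<^sub>v v) $ i" using im unfolding v_def by simp
    finally show "(Matrix.mat m m (\<lambda>(i, j). P i j) *\<^sub>v v) $ i = (e \<cdot>\<^sub>v v) $ i" .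
  next
    show "dim_vec (Matrix.mat m m (\<lambda>(i, j). P i j) *\<^sub>v v) = dim_vec (e \<cdot>\<^sub>v v)" unfolding v_def by simp
  qed
  then show "eigenvalue (Matrix.mat m m (\<lambda>(i, j). P i j)) e"
    unfolding eigenvalue_def eigenvector_def using vc vnz by auto
next
  assume "eigenvalue (Matrix.mat m m (\<lambda>(i, j). P i j)) e"
  then obtain v where vc: "v \<in> carrier_vec m" and vnz: "v \<noteq> 0\<^sub>v m"
    and ev: "Matrix.mat m m (\<lambda>(i, j). P i j) *\<^sub>v v = e \<cdot>\<^sub>v v"
    unfolding eigenvalue_def eigenvector_def by auto
  define w where "w i = v $ i" for i
  have "\<exists>i<m. w i \<noteq> 0"
  proof (rule ccontr)
    assume "\<not> (\<exists>i<m. w i \<noteq> 0)"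
    then have "v = 0\<^sub>v m" using vc unfolding w_def by (intro eq_vecI) auto
    then show False using vnz by simp
  qed
  moreover have "(\<Sum>j<m. P i j * w j) = e * w i" if im: "i < m" for i
  proof -
    have "(\<Sum>j<m. P i j * w j) = (\<Sum>j\<in>{0..<m}. P i j * w j)" by (simp add: atLeast0LessThan)
    also have "\<dots> = (Matrix.mat m m (\<lambda>(i, j). P i j) *\<^sub>v v) $ i"
      using im vc unfolding w_def by (simp add: mult_mat_vec_def scalar_prod_def)
    also have "\<dots> = e * w i" unfolding ev using im vc w_def by simp
    finally show ?thesis .
  qed
  ultimately show "cmat_eigenvalue m P e" unfolding cmat_eigenvalue_def by blast
qed

lemma cmat_eig_finite_nonempty:
  assumes "m \<ge> 1"
  shows "finite {e. cmat_eigenvalue m P e} \<and> (\<exists>e. cmat_eigenvalue m P e)"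
proof -
  define A where "A = Matrix.mat m m (\<lambda>(i, j). P i j)"
  have Ac: "A \<in> carrier_mat m m" unfolding A_def by simp
  have dc: "degree (char_poly A) = m \<and> coeff (char_poly A) m = 1" by (rule degree_monic_char_poly[OF Ac])
  have nz: "char_poly A \<noteq> 0" using dc by auto
  have eq: "{e. cmat_eigenvalue m P e} = {e. poly (char_poly A) e = 0}"
    unfolding cmat_eig_jnf A_def[symmetric] using eigenvalue_root_char_poly[OF Ac] by auto
  have "\<not> constant (poly (char_poly A))" unfolding constant_degree using dc assms by simp
  then obtain z where "poly (char_poly A) z = 0" using fundamental_theorem_of_algebra by blast
  then have "z \<in> {e. cmat_eigenvalue m P e}" unfolding eq by simp
  then have "cmat_eigenvalue m P z" by simp
  then show ?thesis unfolding eq using poly_roots_finite[OF nz] by blast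
qed

definition good_approx :: "complex \<Rightarrow> real \<Rightarrow> real \<Rightarrow> bool" where
  "good_approx l A \<delta> \<longleftrightarrow> A \<ge> 0 \<and> \<delta> > 0 \<and> (\<forall>\<epsilon> \<mu>1 \<mu>2. 0 < \<epsilon> \<longrightarrow> \<epsilon> \<le> \<delta> \<longrightarrow> \<mu>1 \<noteq> \<mu>2 \<longrightarrow>
      cmod (\<mu>1 + cnj l) \<le> \<epsilon> \<longrightarrow> cmod (\<mu>2 + cnj l) \<le> \<epsilon> \<longrightarrow>
      (\<forall>\<omega>::real. (cmod (vfun (- cnj l) (\<i> * of_real \<omega>) - vfun \<mu>1 (\<i> * of_real \<omega>)))^2 \<le> A * \<epsilon>^2 * inverse (1 + \<omega>^2)) \<and>
      (\<forall>\<omega>::real. (cmod (vfun' (- cnj l) (\<i> * of_real \<omega>) -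
          (- 1 / (cnj \<mu>2 - cnj \<mu>1) * vfun \<mu>1 (\<i> * of_real \<omega>) - - 1 / (cnj \<mu>2 - cnj \<mu>1) * vfun \<mu>2 (\<i> * of_real \<omega>))))^2
         \<le> A * \<epsilon>^2 * inverse (1 + \<omega>^2)))"

lemma good_approx_ex: "Re l < 0 \<Longrightarrow> \<exists>A \<delta>. good_approx l A \<delta>"
  unfolding good_approx_def by (rule approx_one)

lemma Vspace_span: "Vspace mus = FS.span (set (map vfun mus))"
  unfolding Vspace_def cspan_span ..

lemma approx_all:
  assumes r1: "length ls \<ge> 1" and re: "\<forall>l\<in>set ls. Re l < 0"
  shows "\<exists>A \<delta>. A \<ge> 0 \<and> \<delta> > 0 \<and> (\<forall>\<epsilon> mus (a :: nat \<Rightarrow> nat \<Rightarrow> nat). 0 < \<epsilon> \<longrightarrow> \<epsilon> \<le> \<delta> \<longrightarrow> distinct mus \<longrightarrow>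
     inj_on (\<lambda>(k, t). a k t) ({..<length ls} \<times> {..<3}) \<longrightarrow>
     (\<forall>k<length ls. \<forall>t<3. a k t < length mus \<and> cmod (mus ! (a k t) + cnj (ls ! k)) \<le> \<epsilon>) \<longrightarrow>
     (\<forall>k<length (TL ls). \<exists>y\<in>Vspace mus. \<forall>\<omega>::real.
        (cmod ((TL ls ! k) (\<i> * of_real \<omega>) - y (\<i> * of_real \<omega>)))^2 \<le> A * \<epsilon>^2 * inverse (1 + \<omega>^2)))"
proof -
  define r where "r = length ls"
  have "\<forall>j\<in>{..<r}. \<exists>p. good_approx (ls ! j) (fst p) (snd p)"
  proof
    fix j assume "j \<in> {..<r}"
    then have "Re (ls ! j) < 0" using re unfolding r_def by simp
    then obtain A \<delta> where "good_approx (ls ! j) A \<delta>" using good_approx_ex by blast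
    then show "\<exists>p. good_approx (ls ! j) (fst p) (snd p)" by (intro exI[of _ "(A, \<delta>)"]) simp
  qed
  then obtain g where g: "\<And>j. j \<in> {..<r} \<Longrightarrow> good_approx (ls ! j) (fst (g j)) (snd (g j))"
    using bchoice[of "{..<r}" "\<lambda>j p. good_approx (ls ! j) (fst p) (snd p)"] by blast
  define A where "A = (\<Sum>j<r. fst (g j))"
  define \<delta> where "\<delta> = Min ((\<lambda>j. snd (g j)) ` {..<r})"
  have gA: "fst (g j) \<ge> 0" "snd (g j) > 0" if "j < r" for j using g[of j] that unfolding good_approx_def by auto
  have A0: "A \<ge> 0" unfolding A_def using gA by (intro sum_nonneg) auto
  have Aj: "fst (g j) \<le> A" if "j < r" for j
    unfolding A_def using that gA by (intro member_le_sum) auto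
  have "0 \<in> {..<r}" using r1 unfolding r_def by (simp add: Suc_le_eq)
  then have ne: "{..<r} \<noteq> {}" by blast
  have d0: "\<delta> > 0" unfolding \<delta>_def using ne gA by (subst Min_gr_iff) auto
  have dj: "\<delta> \<le> snd (g j)" if "j < r" for j unfolding \<delta>_def using that by (intro Min_le) auto
  have main: "\<exists>y\<in>Vspace mus. \<forall>\<omega>::real.
        (cmod ((TL ls ! k) (\<i> * of_real \<omega>) - y (\<i> * of_real \<omega>)))^2 \<le> A * \<epsilon>^2 * inverse (1 + \<omega>^2)"
    if e: "0 < \<epsilon>" "\<epsilon> \<le> \<delta>" and dm: "distinct mus" and inj: "inj_on (\<lambda>(k, t). a k t) ({..<length ls} \<times> {..<3})"
      and am: "\<forall>k<length ls. \<forall>t<3. a k t < length mus \<and> cmod (mus ! (a k t) + cnj (ls ! k)) \<le> \<epsilon>"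
      and k: "k < length (TL ls)" for \<epsilon> mus and a :: "nat \<Rightarrow> nat \<Rightarrow> nat" and k
  proof -
    define j where "j = k div 2"
    have j: "j < r" using k unfolding j_def r_def TL_length by simp
    define i0 where "i0 = a j 0"
    define i1 where "i1 = a j 1"
    have i0: "i0 < length mus" "cmod (mus ! i0 + cnj (ls ! j)) \<le> \<epsilon>" using am j unfolding i0_def r_def by auto
    have i1: "i1 < length mus" "cmod (mus ! i1 + cnj (ls ! j)) \<le> \<epsilon>" using am j unfolding i1_def r_def by auto
    have "i0 \<noteq> i1"
    proof
      assume "i0 = i1"
      then have "(\<lambda>(k, t). a k t) (j, 0) = (\<lambda>(k, t). a k t) (j, 1)" unfolding i0_def i1_def by simp
      then have "(j, 0::nat) = (j, 1)" by (rule inj_onD[OF inj]) (use j in \<open>auto simp: r_def\<close>)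
      then show False by simp
    qed
    then have mne: "mus ! i0 \<noteq> mus ! i1" using dm i0(1) i1(1) by (simp add: nth_eq_iff_index_eq)
    have ej: "\<epsilon> \<le> snd (g j)" using e(2) dj[OF j] by linarith
    from g[of j] j have gj: "good_approx (ls ! j) (fst (g j)) (snd (g j))" by simp
    note bnd = gj[unfolded good_approx_def, THEN conjunct2, THEN conjunct2, rule_format,
        OF e(1) ej mne i0(2) i1(2)]
    have mono: "fst (g j) * \<epsilon>^2 * inverse (1 + \<omega>^2) \<le> A * \<epsilon>^2 * inverse (1 + \<omega>^2)" for \<omega> :: real
    proof -
      have p: "inverse (1 + \<omega>^2) \<ge> 0" by simp
      show ?thesis using Aj[OF j] by (intro mult_right_mono p) auto
    qed
    have m0: "vfun (mus ! i0) \<in> set (map vfun mus)" using i0(1) by simp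
    have m1: "vfun (mus ! i1) \<in> set (map vfun mus)" using i1(1) by simp
    have "k = 2 * j \<or> k = 2 * j + 1" unfolding j_def by presburger
    then show ?thesis
    proof
      assume kk: "k = 2 * j"
      have tk: "TL ls ! k = vfun (- cnj (ls ! j))" using TL_nth[of j ls] j kk unfolding r_def by simp
      show ?thesis
      proof (rule bexI[of _ "vfun (mus ! i0)"])
        show "vfun (mus ! i0) \<in> Vspace mus" unfolding Vspace_span by (rule FS.span_base[OF m0])
        show "\<forall>\<omega>::real. (cmod ((TL ls ! k) (\<i> * of_real \<omega>) - vfun (mus ! i0) (\<i> * of_real \<omega>)))^2
            \<le> A * \<epsilon>^2 * inverse (1 + \<omega>^2)"
          unfolding tk using bnd mono order_trans by blast
      qed
    next
      assume kk: "k = 2 * j + 1"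
      have tk: "TL ls ! k = vfun' (- cnj (ls ! j))" using TL_nth[of j ls] j kk unfolding r_def by simp
      define \<kappa> where "\<kappa> = - 1 / (cnj (mus ! i1) - cnj (mus ! i0))"
      define y where "y = (\<lambda>z. \<kappa> * vfun (mus ! i0) z - \<kappa> * vfun (mus ! i1) z)"
      have yeq: "y = fscale \<kappa> (vfun (mus ! i0)) - fscale \<kappa> (vfun (mus ! i1))"
        unfolding y_def fscale_def by (simp add: fun_eq_iff)
      show ?thesis
      proof (rule bexI[of _ y])
        show "y \<in> Vspace mus" unfolding Vspace_span yeq
          by (intro FS.span_diff FS.span_scale FS.span_base m0 m1)
        show "\<forall>\<omega>::real. (cmod ((TL ls ! k) (\<i> * of_real \<omega>) - y (\<i> * of_real \<omega>)))^2
            \<le> A * \<epsilon>^2 * inverse (1 + \<omega>^2)"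
          unfolding tk y_def \<kappa>_def using bnd mono order_trans by blast
      qed
    qed
  qed
  show ?thesis
    apply (rule exI[of _ A], rule exI[of _ \<delta>])
    apply (intro conjI A0 d0 allI impI)
    apply (rule main)
         apply assumption+
    done
qed

lemma inner_comb_right:
  fixes n :: nat
  assumes "nice f" "\<And>k. k < n \<Longrightarrow> nice (g k)"
  shows "H2_inner f (\<lambda>z. \<Sum>k<n. b k * g k z) = (\<Sum>k<n. b k * H2_inner f (g k))"
proof -
  have "H2_inner f (\<lambda>z. \<Sum>k<n. b k * g k z) = (\<Sum>k<n. H2_inner f (\<lambda>z. b k * g k z))"
    by (rule H2_inner_sum_right) (use assms in \<open>auto intro: nice_scale\<close>)
  also have "\<dots> = (\<Sum>k<n. b k * H2_inner f (g k))" by (simp only: H2_inner_scale_right)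
  finally show ?thesis .
qed

lemma inner_comb_left:
  fixes n :: nat
  assumes "nice f" "\<And>k. k < n \<Longrightarrow> nice (g k)"
  shows "H2_inner (\<lambda>z. \<Sum>k<n. b k * g k z) f = (\<Sum>k<n. cnj (b k) * H2_inner (g k) f)"
proof -
  have "H2_inner (\<lambda>z. \<Sum>k<n. b k * g k z) f = (\<Sum>k<n. H2_inner (\<lambda>z. b k * g k z) f)"
    by (rule H2_inner_sum_left) (use assms in \<open>auto intro: nice_scale\<close>)
  also have "\<dots> = (\<Sum>k<n. cnj (b k) * H2_inner (g k) f)" by (simp only: H2_inner_scale_left)
  finally show ?thesis .
qed

lemma nice_comb: "(\<And>k. k < (n::nat) \<Longrightarrow> nice (g k)) \<Longrightarrow> nice (\<lambda>z. \<Sum>k<n. b k * g k z)"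
  by (intro nice_sum nice_scale) auto

lemma inner_onb:
  assumes on: "orthonormal bs" and nb: "\<And>f. f \<in> set bs \<Longrightarrow> nice f"
  shows "H2_inner (\<lambda>z. \<Sum>i<length bs. a i * (bs ! i) z) (\<lambda>z. \<Sum>k<length bs. b k * (bs ! k) z)
       = (\<Sum>i<length bs. cnj (a i) * b i)"
proof -
  define N where "N = length bs"
  have nbi: "\<And>i. i < N \<Longrightarrow> nice (bs ! i)" using nb unfolding N_def by simp
  have ip: "\<And>i k. i < N \<Longrightarrow> k < N \<Longrightarrow> H2_inner (bs ! i) (bs ! k) = (if i = k then 1 else 0)"
    using on unfolding orthonormal_def N_def by blast
  have "H2_inner (\<lambda>z. \<Sum>i<N. a i * (bs ! i) z) (\<lambda>z. \<Sum>k<N. b k * (bs ! k) z)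
      = (\<Sum>i<N. cnj (a i) * H2_inner (bs ! i) (\<lambda>z. \<Sum>k<N. b k * (bs ! k) z))"
    by (rule inner_comb_left) (use nbi in \<open>auto intro: nice_comb\<close>)
  also have "\<dots> = (\<Sum>i<N. cnj (a i) * b i)"
  proof (intro sum.cong refl)
    fix i assume i: "i \<in> {..<N}"
    have "H2_inner (bs ! i) (\<lambda>z. \<Sum>k<N. b k * (bs ! k) z) = (\<Sum>k<N. b k * H2_inner (bs ! i) (bs ! k))"
      by (rule inner_comb_right) (use nbi i in auto)
    also have "\<dots> = (\<Sum>k<N. if k = i then b k else 0)"
      by (intro sum.cong refl) (use ip i in auto)
    also have "\<dots> = b i" using i by (simp add: sum.delta')
    finally show "cnj (a i) * H2_inner (bs ! i) (\<lambda>z. \<Sum>k<N. b k * (bs ! k) z) = cnj (a i) * b i" by simp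
  qed
  finally show ?thesis unfolding N_def .
qed

lemma cmod_diff_cnj_sq: "(cmod (d - cnj b))^2 = (cmod d)^2 - 2 * Re (d * b) + (cmod b)^2"
  by (simp only: cmod_power2) (simp add: power2_eq_square algebra_simps)

lemma mult_cnj_self: "b * cnj b = complex_of_real ((cmod b)^2)"
  by (rule complex_norm_square[symmetric])

lemma eig_bounds:
  fixes bx bys :: "(complex \<Rightarrow> complex) list" and e :: complex and bt :: real
  defines "m \<equiv> length bx" and "n \<equiv> length bys"
  defines "M \<equiv> (\<lambda>i j. H2_inner (bx ! i) (bys ! j))"
  assumes nbx: "\<And>f. f \<in> set bx \<Longrightarrow> nice f" and nby: "\<And>f. f \<in> set bys \<Longrightarrow> nice f"
    and obx: "orthonormal bx" and oby: "orthonormal bys"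
    and eig: "cmat_eigenvalue m (\<lambda>i k. \<Sum>j<n. M i j * cnj (M k j)) e"
    and appr: "\<And>v. \<exists>d. nsq (\<lambda>z. (\<Sum>i<m. v i * (bx ! i) z) - (\<Sum>j<n. d j * (bys ! j) z))
                      \<le> bt * (\<Sum>i<m. (cmod (v i))^2)"
  shows "e = complex_of_real (Re e) \<and> 0 \<le> Re e \<and> 1 - bt \<le> Re e \<and> Re e \<le> 1"
proof -
  obtain v where vnz: "\<exists>i<m. v i \<noteq> 0" and ev: "\<And>i. i < m \<Longrightarrow> (\<Sum>k<m. (\<Sum>j<n. M i j * cnj (M k j)) * v k) = e * v i"
    using eig unfolding cmat_eigenvalue_def by blast
  define S where "S = (\<Sum>i<m. (cmod (v i))^2)"
  have Spos: "S > 0"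
  proof -
    obtain i0 where i0: "i0 < m" "v i0 \<noteq> 0" using vnz by blast
    have "(cmod (v i0))^2 \<le> S" unfolding S_def using i0 by (intro member_le_sum) auto
    moreover have "(cmod (v i0))^2 > 0" using i0 by simp
    ultimately show ?thesis by linarith
  qed
  have nbxi: "\<And>i. i < m \<Longrightarrow> nice (bx ! i)" using nbx unfolding m_def by simp
  have nbyj: "\<And>j. j < n \<Longrightarrow> nice (bys ! j)" using nby unfolding n_def by simp
  define x where "x = (\<lambda>z. \<Sum>i<m. v i * (bx ! i) z)"
  have nx: "nice x" unfolding x_def by (rule nice_comb[OF nbxi])
  define bb where "bb j = H2_inner x (bys ! j)" for j
  have bb_eq: "bb j = (\<Sum>i<m. cnj (v i) * M i j)" if j: "j < n" for j
    unfolding bb_def x_def M_def by (rule inner_comb_left) (use nbxi nbyj j in auto)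
  have xx: "H2_inner x x = complex_of_real S"
  proof -
    have "H2_inner x x = (\<Sum>i<m. cnj (v i) * v i)"
      unfolding x_def m_def by (rule inner_onb[OF obx nbx])
    also have "\<dots> = (\<Sum>i<m. complex_of_real ((cmod (v i))^2))"
      by (intro sum.cong refl) (simp add: cnj_mult_self)
    finally show ?thesis unfolding S_def by simp
  qed
  have ident: "nsq (\<lambda>z. x z - (\<Sum>j<n. d j * (bys ! j) z))
      = S - (\<Sum>j<n. (cmod (bb j))^2) + (\<Sum>j<n. (cmod (d j - cnj (bb j)))^2)" for d
  proof -
    define y where "y = (\<lambda>z. \<Sum>j<n. d j * (bys ! j) z)"
    have ny: "nice y" unfolding y_def by (rule nice_comb[OF nbyj])
    have xy: "H2_inner x y = (\<Sum>j<n. d j * bb j)"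
      unfolding y_def bb_def by (rule inner_comb_right[OF nx nbyj])
    have yx: "H2_inner y x = cnj (\<Sum>j<n. d j * bb j)" by (subst H2_inner_cnj[of y x]) (simp only: xy)
    have yy: "H2_inner y y = (\<Sum>j<n. cnj (d j) * d j)"
      unfolding y_def n_def by (rule inner_onb[OF oby nby])
    have "H2_inner (\<lambda>z. x z - y z) (\<lambda>z. x z - y z)
        = H2_inner x (\<lambda>z. x z - y z) - H2_inner y (\<lambda>z. x z - y z)"
      by (rule H2_inner_diff_left) (intro nice_diff nx ny)+
    also have "\<dots> = (H2_inner x x - H2_inner x y) - (H2_inner y x - H2_inner y y)"
      using H2_inner_diff_right[OF nx nx ny] H2_inner_diff_right[OF ny nx ny] by simp
    finally have e1: "H2_inner (\<lambda>z. x z - y z) (\<lambda>z. x z - y z)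
        = complex_of_real S - (\<Sum>j<n. d j * bb j) - cnj (\<Sum>j<n. d j * bb j) + (\<Sum>j<n. cnj (d j) * d j)"
      unfolding xx xy yx yy by simp
    have "nsq (\<lambda>z. x z - y z) = Re (H2_inner (\<lambda>z. x z - y z) (\<lambda>z. x z - y z))"
      by (simp add: H2_inner_self)
    also have "\<dots> = S - (\<Sum>j<n. 2 * Re (d j * bb j)) + (\<Sum>j<n. (cmod (d j))^2)"
    proof -
      have "Re (\<Sum>j<n. cnj (d j) * d j) = (\<Sum>j<n. (cmod (d j))^2)"
        by (simp add: Re_sum cnj_mult_self)
      moreover have "Re (\<Sum>j<n. d j * bb j) + Re (cnj (\<Sum>j<n. d j * bb j)) = (\<Sum>j<n. 2 * Re (d j * bb j))"
        by (simp add: Re_sum sum_distrib_left)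
      ultimately show ?thesis unfolding e1 by simp
    qed
    also have "\<dots> = S - (\<Sum>j<n. (cmod (bb j))^2) + (\<Sum>j<n. (cmod (d j - cnj (bb j)))^2)"
      unfolding cmod_diff_cnj_sq by (simp add: sum.distrib sum_subtractf)
    finally show ?thesis unfolding y_def .
  qed
  have bessel: "(\<Sum>j<n. (cmod (bb j))^2) \<le> S"
  proof -
    have "0 \<le> nsq (\<lambda>z. x z - (\<Sum>j<n. cnj (bb j) * (bys ! j) z))" by (rule nsq_nonneg)
    also have "\<dots> = S - (\<Sum>j<n. (cmod (bb j))^2)" unfolding ident by simp
    finally show ?thesis by simp
  qed
  obtain d where d: "nsq (\<lambda>z. x z - (\<Sum>j<n. d j * (bys ! j) z)) \<le> bt * S"
    using appr[of v] unfolding x_def S_def by blast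
  have lower: "S - (\<Sum>j<n. (cmod (bb j))^2) \<le> bt * S"
  proof -
    have "S - (\<Sum>j<n. (cmod (bb j))^2) \<le> nsq (\<lambda>z. x z - (\<Sum>j<n. d j * (bys ! j) z))"
      unfolding ident by (simp add: sum_nonneg)
    then show ?thesis using d by linarith
  qed
  have eS: "e * complex_of_real S = complex_of_real (\<Sum>j<n. (cmod (bb j))^2)"
  proof -
    have cS: "complex_of_real S = (\<Sum>i<m. cnj (v i) * v i)"
      unfolding S_def of_real_sum by (intro sum.cong refl) (simp only: cnj_mult_self)
    have "e * complex_of_real S = (\<Sum>i<m. cnj (v i) * (e * v i))"
      unfolding cS sum_distrib_left by (intro sum.cong refl) (simp only: mult_ac)
    also have "\<dots> = (\<Sum>i<m. cnj (v i) * (\<Sum>k<m. (\<Sum>j<n. M i j * cnj (M k j)) * v k))"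
      by (intro sum.cong refl) (simp add: ev)
    also have "\<dots> = (\<Sum>i<m. \<Sum>k<m. \<Sum>j<n. (cnj (v i) * M i j) * (v k * cnj (M k j)))"
      by (intro sum.cong refl) (simp add: sum_distrib_left sum_distrib_right mult_ac)
    also have "\<dots> = (\<Sum>i<m. \<Sum>j<n. \<Sum>k<m. (cnj (v i) * M i j) * (v k * cnj (M k j)))"
      by (rule sum.cong[OF refl], rule sum.swap)
    also have "\<dots> = (\<Sum>j<n. \<Sum>i<m. \<Sum>k<m. (cnj (v i) * M i j) * (v k * cnj (M k j)))"
      by (rule sum.swap)
    also have "\<dots> = (\<Sum>j<n. bb j * cnj (bb j))"
      by (intro sum.cong refl) (simp add: bb_eq sum_product cnj_sum)
    also have "\<dots> = complex_of_real (\<Sum>j<n. (cmod (bb j))^2)"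
      by (simp add: mult_cnj_self)
    finally show ?thesis .
  qed
  define R where "R = (\<Sum>j<n. (cmod (bb j))^2) / S"
  have eR: "e = complex_of_real R"
  proof -
    have "e = e * complex_of_real S / complex_of_real S" using Spos by simp
    also have "\<dots> = complex_of_real R" unfolding eS R_def by simp
    finally show ?thesis .
  qed
  have R0: "R \<ge> 0" unfolding R_def using Spos by (intro divide_nonneg_pos sum_nonneg) auto
  have R1: "R \<le> 1" unfolding R_def using Spos bessel by simp
  have R2: "1 - bt \<le> R"
  proof -
    have "S - bt * S \<le> (\<Sum>j<n. (cmod (bb j))^2)" using lower by linarith
    then have "(1 - bt) * S \<le> R * S" unfolding R_def using Spos by (simp add: algebra_simps)
    then show ?thesis using Spos by simp
  qed
  show ?thesis using eR R0 R1 R2 by simp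
qed

lemma approx_comb:
  fixes m N :: nat
  assumes coef: "\<And>i. i < m \<Longrightarrow> bx ! i = (\<lambda>z. \<Sum>k<N. coef i k * (TLs ! k) z)"
    and Cc: "\<And>i. i < m \<Longrightarrow> (\<Sum>k<N. cmod (coef i k)) \<le> Cc"
    and yk: "\<And>k. k < N \<Longrightarrow> (cmod ((TLs ! k) (\<i> * of_real \<omega>) - yk k (\<i> * of_real \<omega>)))^2 \<le> A * \<epsilon>^2 * inverse (1 + \<omega>^2)"
    and A0: "A \<ge> 0" and C0: "Cc \<ge> 0"
  shows "(cmod ((\<Sum>i<m. v i * (bx ! i) (\<i> * of_real \<omega>)) - (\<Sum>i<m. v i * (\<Sum>k<N. coef i k * yk k (\<i> * of_real \<omega>)))))^2
     \<le> (Cc^2 * A * \<epsilon>^2 * real m * (\<Sum>i<m. (cmod (v i))^2)) * inverse (1 + \<omega>^2)"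
proof -
  define z where "z = \<i> * complex_of_real \<omega>"
  define h where "h = sqrt (A * \<epsilon>^2 * inverse (1 + \<omega>^2))"
  have q1: "1 + \<omega>^2 > 0" using zero_le_power2[of \<omega>] by linarith
  then have q2: "inverse (1 + \<omega>^2) \<ge> 0" by simp
  have q3: "A * \<epsilon>^2 \<ge> 0" using A0 by simp
  have p0: "0 \<le> A * \<epsilon>^2 * inverse (1 + \<omega>^2)" using q3 q2 by (rule mult_nonneg_nonneg)
  have hsq: "h^2 = A * \<epsilon>^2 * inverse (1 + \<omega>^2)" unfolding h_def by (rule real_sqrt_pow2[OF p0])
  have h0: "h \<ge> 0" unfolding h_def by (rule real_sqrt_ge_zero[OF p0])
  have Ek: "cmod ((TLs ! k) z - yk k z) \<le> h" if "k < N" for k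
    unfolding h_def z_def by (rule real_le_rsqrt) (rule yk[OF that])
  have eq: "(\<Sum>i<m. v i * (bx ! i) z) - (\<Sum>i<m. v i * (\<Sum>k<N. coef i k * yk k z))
      = (\<Sum>i<m. v i * (\<Sum>k<N. coef i k * ((TLs ! k) z - yk k z)))"
  proof -
    have "(\<Sum>i<m. v i * (bx ! i) z) = (\<Sum>i<m. v i * (\<Sum>k<N. coef i k * (TLs ! k) z))"
      by (intro sum.cong refl) (simp add: coef)
    then have "(\<Sum>i<m. v i * (bx ! i) z) - (\<Sum>i<m. v i * (\<Sum>k<N. coef i k * yk k z))
        = (\<Sum>i<m. v i * (\<Sum>k<N. coef i k * (TLs ! k) z) - v i * (\<Sum>k<N. coef i k * yk k z))"
      by (simp add: sum_subtractf)
    also have "\<dots> = (\<Sum>i<m. v i * (\<Sum>k<N. coef i k * ((TLs ! k) z - yk k z)))"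
      by (intro sum.cong refl) (simp add: right_diff_distrib sum_subtractf)
    finally show ?thesis .
  qed
  have inner: "cmod (\<Sum>k<N. coef i k * ((TLs ! k) z - yk k z)) \<le> h * Cc" if i: "i < m" for i
  proof -
    have "cmod (\<Sum>k<N. coef i k * ((TLs ! k) z - yk k z)) \<le> (\<Sum>k<N. cmod (coef i k * ((TLs ! k) z - yk k z)))"
      by (rule norm_sum)
    also have "\<dots> \<le> (\<Sum>k<N. cmod (coef i k) * h)"
      by (intro sum_mono) (simp add: norm_mult Ek mult_left_mono)
    also have "\<dots> = h * (\<Sum>k<N. cmod (coef i k))" by (simp add: sum_distrib_left mult.commute)
    also have "\<dots> \<le> h * Cc" by (rule mult_left_mono[OF Cc[OF i] h0])
    finally show ?thesis .
  qed
  have "cmod (\<Sum>i<m. v i * (\<Sum>k<N. coef i k * ((TLs ! k) z - yk k z)))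
      \<le> (\<Sum>i<m. cmod (v i * (\<Sum>k<N. coef i k * ((TLs ! k) z - yk k z))))"
    by (rule norm_sum)
  also have "\<dots> \<le> (\<Sum>i<m. cmod (v i) * (h * Cc))"
    by (intro sum_mono) (simp add: norm_mult inner mult_left_mono)
  also have "\<dots> = h * Cc * (\<Sum>i<m. cmod (v i))" by (simp add: sum_distrib_left mult_ac)
  finally have nb: "cmod (\<Sum>i<m. v i * (\<Sum>k<N. coef i k * ((TLs ! k) z - yk k z))) \<le> h * Cc * (\<Sum>i<m. cmod (v i))" .
  have cs: "(\<Sum>i<m. cmod (v i))^2 \<le> real m * (\<Sum>i<m. (cmod (v i))^2)"
    using Cauchy_Schwarz_ineq_sum[of "\<lambda>i. 1" "\<lambda>i. cmod (v i)" "{..<m}"] by simp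
  have "(cmod (\<Sum>i<m. v i * (\<Sum>k<N. coef i k * ((TLs ! k) z - yk k z))))^2 \<le> (h * Cc * (\<Sum>i<m. cmod (v i)))^2"
    by (rule power_mono[OF nb]) simp
  also have "\<dots> = h^2 * Cc^2 * (\<Sum>i<m. cmod (v i))^2" by (simp add: power_mult_distrib)
  also have "\<dots> \<le> h^2 * Cc^2 * (real m * (\<Sum>i<m. (cmod (v i))^2))"
    by (rule mult_left_mono[OF cs]) simp
  also have "\<dots> = (Cc^2 * A * \<epsilon>^2 * real m * (\<Sum>i<m. (cmod (v i))^2)) * inverse (1 + \<omega>^2)"
    unfolding hsq by (simp add: mult_ac)
  finally have fin: "(cmod (\<Sum>i<m. v i * (\<Sum>k<N. coef i k * ((TLs ! k) z - yk k z))))^2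
     \<le> (Cc^2 * A * \<epsilon>^2 * real m * (\<Sum>i<m. (cmod (v i))^2)) * inverse (1 + \<omega>^2)" .
  have "(cmod ((\<Sum>i<m. v i * (bx ! i) z) - (\<Sum>i<m. v i * (\<Sum>k<N. coef i k * yk k z))))^2
     \<le> (Cc^2 * A * \<epsilon>^2 * real m * (\<Sum>i<m. (cmod (v i))^2)) * inverse (1 + \<omega>^2)"
    unfolding eq by (rule fin)
  then show ?thesis unfolding z_def .
qed

theorem theorem4p2:
  fixes ls :: "complex list"
  assumes "length ls \<ge> 1"
    and "distinct ls"
    and "\<forall>l\<in>set ls. Re l < 0"
  shows "\<exists>C. \<forall>\<epsilon>>0. \<forall>mus :: complex list.
           distinct mus \<and> (\<forall>m\<in>set mus. Re m > 0) \<and>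
           (\<exists>a :: nat \<Rightarrow> nat \<Rightarrow> nat.
              inj_on (\<lambda>(k, t). a k t) ({..<length ls} \<times> {..<3}) \<and>
              (\<forall>k<length ls. \<forall>t<3. a k t < length mus \<and>
                 cmod (mus ! (a k t) + cnj (ls ! k)) \<le> \<epsilon>))
           \<longrightarrow> sin (phi_max (Tspace ls) (Vspace mus)) \<le> C * \<epsilon>"
proof -
  define r where "r = length ls"
  define TLs where "TLs = TL ls"
  have lenT: "length TLs = 2 * r" unfolding TLs_def r_def by (rule TL_length)
  have Teq: "Tspace ls = FS.span (set TLs)" unfolding TLs_def Tspace_TL cspan_span ..
  have niceT: "\<And>f. f \<in> set TLs \<Longrightarrow> nice f" unfolding TLs_def by (rule nice_TL[OF assms(3)])
  have "\<exists>bs. is_onb (Tspace ls) bs" unfolding Tspace_TL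
  proof (rule exists_onb)
    show "\<And>f. f \<in> set (TL ls) \<Longrightarrow> nice f" by (rule nice_TL[OF assms(3)])
    show "\<And>f. f \<in> cspan (TL ls) \<Longrightarrow> H2_inner f f = 0 \<Longrightarrow> f = 0"
      by (rule nondeg_T[OF assms(2) assms(3)])
  qed
  note exT = this
  define bx where "bx = (SOME bs. is_onb (Tspace ls) bs)"
  have onbx: "is_onb (Tspace ls) bx" unfolding bx_def by (rule someI_ex[OF exT])
  define m where "m = length bx"
  have bxT: "set bx \<subseteq> FS.span (set TLs)" and obx: "orthonormal bx"
    using onbx unfolding is_onb_def orthonormal_def Teq by auto
  have nbx: "\<And>f. f \<in> set bx \<Longrightarrow> nice f"
    using bxT niceT nice_span by blast
  have bxi: "\<And>i. i < m \<Longrightarrow> bx ! i \<in> FS.span (set TLs)" using bxT unfolding m_def by auto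
  have m_le: "m \<le> 2 * r"
  proof -
    have di: "distinct bx \<and> \<not> FS.dependent (set bx)" by (rule orthonormal_indep[OF obx nbx])
    have "card (set bx) \<le> length TLs" by (rule card_bound) (use di bxT in auto)
    then show ?thesis unfolding m_def lenT using di distinct_card by metis
  qed
  have r1: "r \<ge> 1" using assms(1) unfolding r_def .
  have m_ge: "m \<ge> 1"
  proof (rule ccontr)
    assume "\<not> m \<ge> 1"
    then have "bx = []" unfolding m_def by (cases bx) auto
    have l0: "0 < length ls" using r1 unfolding r_def by linarith
    have t0: "TLs ! 0 = vfun (- cnj (ls ! 0))" using TL_nth[OF l0] unfolding TLs_def by simp
    have "TLs ! 0 \<in> FS.span (set TLs)" using lenT r1 by (intro FS.span_base nth_mem) simp
    also have "\<dots> \<subseteq> FS.span (set bx)"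
      using onbx unfolding is_onb_def Teq cspan_span by auto
    also have "\<dots> = {0}" using \<open>bx = []\<close> by (simp add: FS.span_empty)
    finally have "vfun (- cnj (ls ! 0)) = 0" unfolding t0 by simp
    then have "vfun (- cnj (ls ! 0)) 0 = 0" by simp
    then have "1 / (0 - ls ! 0) = 0" unfolding vfun_neg_cnj .
    then have "ls ! 0 = 0" by simp
    moreover have "Re (ls ! 0) < 0" using assms(3) l0 by simp
    ultimately show False by simp
  qed
  have "\<forall>i. \<exists>c. i < m \<longrightarrow> bx ! i = (\<lambda>z. \<Sum>k<2 * r. c k * (TLs ! k) z)"
  proof
    fix i
    show "\<exists>c. i < m \<longrightarrow> bx ! i = (\<lambda>z. \<Sum>k<2 * r. c k * (TLs ! k) z)"
    proof (cases "i < m")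
      case True
      then have "bx ! i \<in> cspan TLs" using bxi cspan_span by blast
      then show ?thesis unfolding cspan_mem lenT by blast
    qed simp
  qed
  then obtain coef where coef: "\<And>i. i < m \<Longrightarrow> bx ! i = (\<lambda>z. \<Sum>k<2 * r. coef i k * (TLs ! k) z)"
    using choice by metis
  define Cc where "Cc = (\<Sum>i<m. \<Sum>k<2 * r. cmod (coef i k))"
  have C0: "Cc \<ge> 0" unfolding Cc_def by (intro sum_nonneg) auto
  have Cci: "(\<Sum>k<2 * r. cmod (coef i k)) \<le> Cc" if "i < m" for i
    unfolding Cc_def using that by (intro member_le_sum sum_nonneg) auto
  obtain A \<delta> where A0: "A \<ge> 0" and d0: "\<delta> > 0" and appr: "\<forall>\<epsilon> mus (a :: nat \<Rightarrow> nat \<Rightarrow> nat). 0 < \<epsilon> \<longrightarrow> \<epsilon> \<le> \<delta> \<longrightarrow> distinct mus \<longrightarrow>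
     inj_on (\<lambda>(k, t). a k t) ({..<length ls} \<times> {..<3}) \<longrightarrow>
     (\<forall>k<length ls. \<forall>t<3. a k t < length mus \<and> cmod (mus ! (a k t) + cnj (ls ! k)) \<le> \<epsilon>) \<longrightarrow>
     (\<forall>k<length (TL ls). \<exists>y\<in>Vspace mus. \<forall>\<omega>::real.
        (cmod ((TL ls ! k) (\<i> * of_real \<omega>) - y (\<i> * of_real \<omega>)))^2 \<le> A * \<epsilon>^2 * inverse (1 + \<omega>^2))"
    using approx_all[OF assms(1) assms(3)] by blast
  define Ic where "Ic = (LINT \<omega>|lborel. inverse (1 + \<omega>^2)) / (2 * pi)"
  have I0: "Ic \<ge> 0" unfolding Ic_def by (intro divide_nonneg_pos integral_nonneg_AE) auto
  define D where "D = Cc^2 * A * real m * Ic"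
  have D0: "D \<ge> 0" unfolding D_def using A0 I0 by simp
  define C where "C = max (sqrt D) (1 / \<delta>)"
  show ?thesis
  proof (rule exI[of _ C], intro allI impI)
    fix \<epsilon> :: real and mus :: "complex list"
    assume e: "\<epsilon> > 0"
    assume H: "distinct mus \<and> (\<forall>m\<in>set mus. Re m > 0) \<and>
           (\<exists>a :: nat \<Rightarrow> nat \<Rightarrow> nat.
              inj_on (\<lambda>(k, t). a k t) ({..<length ls} \<times> {..<3}) \<and>
              (\<forall>k<length ls. \<forall>t<3. a k t < length mus \<and>
                 cmod (mus ! (a k t) + cnj (ls ! k)) \<le> \<epsilon>))"
    then have dm: "distinct mus" and rem: "\<forall>m\<in>set mus. Re m > 0" by auto
    from H obtain a :: "nat \<Rightarrow> nat \<Rightarrow> nat" where inj: "inj_on (\<lambda>(k, t). a k t) ({..<length ls} \<times> {..<3})"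
      and am: "\<forall>k<length ls. \<forall>t<3. a k t < length mus \<and> cmod (mus ! (a k t) + cnj (ls ! k)) \<le> \<epsilon>"
      by blast
    show "sin (phi_max (Tspace ls) (Vspace mus)) \<le> C * \<epsilon>"
    proof (cases "\<epsilon> \<le> \<delta>")
      case False
      have "sin (phi_max (Tspace ls) (Vspace mus)) \<le> 1" by (rule sin_le_one)
      also have "1 \<le> (1 / \<delta>) * \<epsilon>" using False d0 by (simp add: field_simps)
      also have "\<dots> \<le> C * \<epsilon>" unfolding C_def using e by (intro mult_right_mono) auto
      finally show ?thesis .
    next
      case True
      define V where "V = Vspace mus"
      have Vspan: "V = FS.span (set (map vfun mus))" unfolding V_def by (rule Vspace_span)
      have niceV0: "\<And>f. f \<in> set (map vfun mus) \<Longrightarrow> nice f" by (rule nice_V[OF rem])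
      have niceVall: "\<And>f. f \<in> V \<Longrightarrow> nice f" unfolding Vspan using niceV0 nice_span by blast
      have "\<exists>bs. is_onb (Vspace mus) bs" unfolding Vspace_def
      proof (rule exists_onb)
        show "\<And>f. f \<in> set (map vfun mus) \<Longrightarrow> nice f" by (rule nice_V[OF rem])
        show "\<And>f. f \<in> cspan (map vfun mus) \<Longrightarrow> H2_inner f f = 0 \<Longrightarrow> f = 0"
          by (rule nondeg_V[OF dm rem])
      qed
      note exV = this
      define bys where "bys = (SOME bs. is_onb (Vspace mus) bs)"
      have onby: "is_onb (Vspace mus) bys" unfolding bys_def by (rule someI_ex[OF exV])
      define n where "n = length bys"
      have bysV: "set bys \<subseteq> V" and Vbys: "V \<subseteq> FS.span (set bys)" and oby: "orthonormal bys"
        using onby unfolding is_onb_def orthonormal_def V_def[symmetric] cspan_span by auto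
      have nby: "\<And>f. f \<in> set bys \<Longrightarrow> nice f" using bysV niceVall by blast
      have len_mus: "length mus \<le> n"
      proof -
        have injv: "inj_on vfun (set mus)"
        proof (rule inj_onI)
          fix x y assume xy: "x \<in> set mus" "y \<in> set mus" "vfun x = vfun y"
          then have "vfun x 0 = vfun y 0" by simp
          then have "1 / cnj x = 1 / cnj y" unfolding vfun_def by simp
          then have "cnj x = cnj y" by simp
          then show "x = y" by simp
        qed
        have dv: "distinct (map vfun mus)" using dm injv by (simp add: distinct_map)
        have ind: "\<not> FS.dependent (set (map vfun mus))"
        proof (rule indep_list[OF dv])
          fix c assume c0: "(\<lambda>z. \<Sum>k<length (map vfun mus). c k * (map vfun mus ! k) z) = 0"
          have "\<And>\<omega>::real. (\<Sum>k<length mus. c k * vfun (mus ! k) (\<i> * of_real \<omega>)) = 0"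
          proof -
            fix \<omega> :: real
            have "(\<Sum>k<length (map vfun mus). c k * (map vfun mus ! k) (\<i> * of_real \<omega>)) = 0"
              using fun_cong[OF c0, of "\<i> * of_real \<omega>"] by simp
            then show "(\<Sum>k<length mus. c k * vfun (mus ! k) (\<i> * of_real \<omega>)) = 0" by simp
          qed
          then show "\<forall>k<length (map vfun mus). c k = 0" using V_coeff_zero[OF dm rem] by simp
        qed
        have "card (set (map vfun mus)) \<le> length bys"
          by (rule card_bound[OF ind]) (use Vbys FS.span_superset Vspan in blast)
        moreover have "card (set (map vfun mus)) = length mus" using distinct_card[OF dv] by simp
        ultimately show ?thesis unfolding n_def by simp
      qed
      have len3: "3 * r \<le> length mus"
      proof -
        have "card ((\<lambda>(k, t). a k t) ` ({..<r} \<times> {..<3})) = card ({..<r} \<times> {..<(3::nat)})"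
          using inj unfolding r_def by (rule card_image)
        also have "\<dots> = 3 * r" by simp
        finally have c3: "card ((\<lambda>(k, t). a k t) ` ({..<r} \<times> {..<3})) = 3 * r" .
        have "(\<lambda>(k, t). a k t) ` ({..<r} \<times> {..<3}) \<subseteq> {..<length mus}"
          using am unfolding r_def by auto
        then have "card ((\<lambda>(k, t). a k t) ` ({..<r} \<times> {..<3})) \<le> card {..<length mus}"
          by (rule card_mono[rotated]) simp
        then show ?thesis unfolding c3 by simp
      qed
      have mn: "m \<le> n" using m_le len3 len_mus by linarith
      have "\<forall>k<length (TL ls). \<exists>y\<in>Vspace mus. \<forall>\<omega>::real.
        (cmod ((TL ls ! k) (\<i> * of_real \<omega>) - y (\<i> * of_real \<omega>)))^2 \<le> A * \<epsilon>^2 * inverse (1 + \<omega>^2)"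
        using appr e True dm inj am by blast
      then have "\<forall>k. \<exists>y. k < 2 * r \<longrightarrow> y \<in> V \<and> (\<forall>\<omega>::real.
        (cmod ((TLs ! k) (\<i> * of_real \<omega>) - y (\<i> * of_real \<omega>)))^2 \<le> A * \<epsilon>^2 * inverse (1 + \<omega>^2))"
        unfolding V_def TLs_def[symmetric] lenT by blast
      then obtain yk where yk: "\<And>k. k < 2 * r \<Longrightarrow> yk k \<in> V \<and> (\<forall>\<omega>::real.
        (cmod ((TLs ! k) (\<i> * of_real \<omega>) - yk k (\<i> * of_real \<omega>)))^2 \<le> A * \<epsilon>^2 * inverse (1 + \<omega>^2))"
        using choice by metis
      have apprH: "\<exists>d. nsq (\<lambda>z. (\<Sum>i<length bx. v i * (bx ! i) z) - (\<Sum>j<length bys. d j * (bys ! j) z))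
                      \<le> (D * \<epsilon>^2) * (\<Sum>i<length bx. (cmod (v i))^2)" for v
      proof -
        define y' where "y' = (\<lambda>z. \<Sum>i<m. v i * (\<Sum>k<2 * r. coef i k * yk k z))"
        have y'eq: "y' = (\<Sum>i<m. fscale (v i) (\<Sum>k<2 * r. fscale (coef i k) (yk k)))"
          unfolding y'_def by (rule ext) (simp add: sum_fun_apply fscale_def)
        have y'V: "y' \<in> V" unfolding y'eq Vspan
          using yk unfolding Vspan by (intro FS.span_sum FS.span_scale) auto
        then have "y' \<in> cspan bys" using Vbys cspan_span by blast
        then obtain d where d: "y' = (\<lambda>z. \<Sum>j<length bys. d j * (bys ! j) z)" unfolding cspan_mem by blast
        define x where "x = (\<lambda>z. \<Sum>i<m. v i * (bx ! i) z)"
        have nx: "nice x" unfolding x_def by (rule nice_comb) (use nbx m_def in auto)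
        have ny: "nice y'" using y'V niceVall by blast
        define B where "B = Cc^2 * A * \<epsilon>^2 * real m * (\<Sum>i<m. (cmod (v i))^2)"
        have B0: "B \<ge> 0" unfolding B_def using A0 by (intro mult_nonneg_nonneg sum_nonneg) auto
        have pw: "(cmod (x (\<i> * of_real \<omega>) - y' (\<i> * of_real \<omega>)))^2 \<le> B * inverse (1 + \<omega>^2)" for \<omega> :: real
          unfolding x_def y'_def B_def
          by (rule approx_comb[OF coef Cci _ A0 C0]) (use yk in auto)
        have "nsq (\<lambda>z. x z - y' z) \<le> B * Ic"
          unfolding Ic_def by (rule nsq_bound[OF nice_diff[OF nx ny] B0 pw])
        also have "B * Ic = (D * \<epsilon>^2) * (\<Sum>i<m. (cmod (v i))^2)" unfolding B_def D_def by (simp add: mult_ac)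
        finally have "nsq (\<lambda>z. x z - y' z) \<le> (D * \<epsilon>^2) * (\<Sum>i<m. (cmod (v i))^2)" .
        then show ?thesis unfolding x_def d m_def by blast
      qed
      define M where "M = (\<lambda>i j. H2_inner (bx ! i) (bys ! j))"
      define G where "G = (\<lambda>i k. \<Sum>j<n. M i j * cnj (M k j))"
      have eb: "e = complex_of_real (Re e) \<and> 0 \<le> Re e \<and> 1 - D * \<epsilon>^2 \<le> Re e \<and> Re e \<le> 1"
        if "cmat_eigenvalue m G e" for e
        using eig_bounds[of bx bys e "D * \<epsilon>^2", OF nbx nby obx oby _ apprH] that
        unfolding G_def M_def m_def n_def by blast
      define SV where "SV = singular_values (length bx) (length bys) (\<lambda>i j. H2_inner (bx ! i) (bys ! j))"
      have SVeq: "SV = {\<sigma>. \<sigma> \<ge> 0 \<and> cmat_eigenvalue m G (complex_of_real (\<sigma>^2))}"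
        unfolding SV_def singular_values_def G_def M_def m_def[symmetric] n_def[symmetric] using mn by simp
      obtain fin: "finite {e. cmat_eigenvalue m G e}" and ex0: "\<exists>e. cmat_eigenvalue m G e"
        using cmat_eig_finite_nonempty[OF m_ge] by blast
      have SVsub: "SV \<subseteq> (\<lambda>e. sqrt (Re e)) ` {e. cmat_eigenvalue m G e}"
      proof
        fix \<sigma> assume "\<sigma> \<in> SV"
        then have s: "\<sigma> \<ge> 0" "cmat_eigenvalue m G (complex_of_real (\<sigma>^2))" unfolding SVeq by auto
        have "\<sigma> = sqrt (Re (complex_of_real (\<sigma>^2)))" using s(1) by simp
        then show "\<sigma> \<in> (\<lambda>e. sqrt (Re e)) ` {e. cmat_eigenvalue m G e}" using s(2) by blast
      qed
      have finSV: "finite SV" using SVsub fin by (rule finite_subset[OF _ finite_imageI])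
      obtain e0 where e0: "cmat_eigenvalue m G e0" using ex0 by blast
      have "sqrt (Re e0) \<in> SV"
      proof -
        have b: "e0 = complex_of_real (Re e0)" "0 \<le> Re e0" using eb[OF e0] by auto
        have q: "complex_of_real ((sqrt (Re e0))^2) = e0" using b by simp
        have q2: "cmat_eigenvalue m G (complex_of_real ((sqrt (Re e0))^2))" unfolding q by (rule e0)
        have q3: "sqrt (Re e0) \<ge> 0" using b(2) by simp
        show ?thesis unfolding SVeq mem_Collect_eq using q2 q3 by blast
      qed
      then have neSV: "SV \<noteq> {}" by blast
      define \<sigma>0 where "\<sigma>0 = Min SV"
      have s0: "\<sigma>0 \<in> SV" unfolding \<sigma>0_def using finSV neSV by (rule Min_in)
      then have s0': "\<sigma>0 \<ge> 0" "cmat_eigenvalue m G (complex_of_real (\<sigma>0^2))" unfolding SVeq by auto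
      have bnds: "1 - D * \<epsilon>^2 \<le> \<sigma>0^2" "\<sigma>0^2 \<le> 1" using eb[OF s0'(2)] by auto
      have s01: "\<sigma>0 \<le> 1"
      proof (rule ccontr)
        assume "\<not> \<sigma>0 \<le> 1"
        then have "1 < \<sigma>0" by simp
        then have "1 * 1 < \<sigma>0 * \<sigma>0" by (intro mult_strict_mono) auto
        then show False using bnds(2) by (simp add: power2_eq_square)
      qed
      have phi: "phi_max (Tspace ls) (Vspace mus) = arccos \<sigma>0"
        unfolding phi_max_def Let_def \<sigma>0_def SV_def bx_def bys_def ..
      have "sin (phi_max (Tspace ls) (Vspace mus)) = sqrt (1 - \<sigma>0^2)"
        unfolding phi using s0'(1) s01 by (intro sin_arccos) auto
      also have "\<dots> \<le> sqrt (D * \<epsilon>^2)" using bnds(1) by (intro real_sqrt_le_mono) linarith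
      also have "\<dots> = sqrt D * \<epsilon>" using e by (simp add: real_sqrt_mult)
      also have "\<dots> \<le> C * \<epsilon>" unfolding C_def using e by (intro mult_right_mono) auto
      finally show ?thesis .
    qed
  qed
qed


end
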